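(* Let $\mathbf{E}\in\mathbb{K}^{m\times\sigma}$ with $\sigma\ge 2$, let $\mathbf{J}\in\mathbb{K}^{\sigma\times\sigma}$ be upper triangular, let $\mathbf{E}^{(1)}$ be the first $\lceil\sigma/2\rceil$ columns of $\mathbf{E}$ and $\mathbf{J}^{(1)}$, $\mathbf{J}^{(2)}$ the leading $\lceil\sigma/2\rceil\times\lceil\sigma/2\rceil$ and trailing $\lfloor\sigma/2\rfloor\times\lfloor\sigma/2\rfloor$ principal submatrices of $\mathbf{J}$. Let $\mathbf{s}\in\mathbb{Z}^m$, let $\mathbf{P}^{(1)}$ be the $\mathbf{s}$-Popov interpolation basis for $(\mathbf{E}^{(1)},\mathbf{J}^{(1)})$ with $\mathbf{s}$-minimal degree $\boldsymbol{\delta}^{(1)}$, let $\mathbf{E}^{(2)}$ be the last $\lfloor\sigma/2\rfloor$ columns of $\mathbf{P}^{(1)}\cdot\mathbf{E}$ (the matrix whose $i$-th row is the $i$-th row of $\mathbf{P}^{(1)}$ applied to $\mathbf{E}$), and let $\mathbf{P}^{(2)}$ be the $(\mathbf{s}+\boldsymbol{\delta}^{(1)})$-Popov interpolation basis for $(\mathbf{E}^{(2)},\mathbf{J}^{(2)})$ with $(\mathbf{s}+\boldsymbol{\delta}^{(1)})$-minimal degree $\boldsymbol{\delta}^{(2)}$. Then $\mathbf{P}^{(2)}\mathbf{P}^{(1)}$ is an $\mathbf{s}$-reduced interpolation basis for $(\mathbf{E},\mathbf{J})$, and the $\mathbf{s}$-minimal degree of $(\mathbf{E},\mathbf{J})$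 is $\boldsymbol{\delta}^{(1)}+\boldsymbol{\delta}^{(2)}$.
   Context: For $p\in\mathbb{K}[X]$ and $\mathbf{e}\in\mathbb{K}^{1\times\sigma}$, $p\cdot\mathbf{e}=\mathbf{e}\,p(\mathbf{J})$; for $\mathbf{p}=(p_1,\dots,p_m)$, $\mathbf{p}\cdot\mathbf{E}=\sum_i p_i\cdot\mathbf{e}_i$ with $\mathbf{e}_i$ the rows of $\mathbf{E}$. An interpolant for $(\mathbf{E},\mathbf{J})$ is $\mathbf{p}$ with $\mathbf{p}\cdot\mathbf{E}=0$; an interpolation basis is a matrix in $\mathbb{K}[X]^{m\times m}$ whose rows form a basis of the (free, rank $m$) module of interpolants. For $\mathbf{s}\in\mathbb{Z}^m$: the $\mathbf{s}$-degree of a nonzero row $[p_j]$ is $\max_j(\deg p_j+s_j)$; the $\mathbf{s}$-leading matrix of a full-rank $\mathbf{P}$ with row $\mathbf{s}$-degrees $d_i$ has $(i,j)$ entry the coefficient of degree $d_i-s_j$ of $p_{ij}$; $\mathbf{P}$ is $\mathbf{s}$-reduced if this matrix has full row rank. The $\mathbf{s}$-pivot index of a row is the largest $j$ attaining its $\mathbf{s}$-degree and $p_j$ its pivot entry. A nonsingular matrix is in $\mathbf{s}$-Popov form if its $\mathbf{s}$-pivot entries are monic and on the diagonal and in each column nonpivot entries have degree less than the pivot entry. The $\mathbf{s}$-Popov interpolation basis is the unique interpolation basis in $\mathbf{s}$-Popov form, and the $\mathbf{s}$-minimal degree is the tuple of degrees of its diagonal entries. *)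

theory Defs
  imports "Jordan_Normal_Form.Determinant" "HOL-Computational_Algebra.Polynomial"
begin

definition poly_at_mat :: "'a::field poly \<Rightarrow> 'a mat \<Rightarrow> 'a mat" where
  "poly_at_mat p J = mat (dim_row J) (dim_col J)
     (\<lambda>(a,b). \<Sum>i\<le>degree p. coeff p i * (J ^\<^sub>m i) $$ (a,b))"

definition act1 :: "'a::field poly \<Rightarrow> 'a vec \<Rightarrow> 'a mat \<Rightarrow> 'a vec" where
  "act1 p e J = vec (dim_col J) (\<lambda>k. \<Sum>l<dim_vec e. e $ l * poly_at_mat p J $$ (l,k))"

definition act :: "'a::field poly vec \<Rightarrow> 'a mat \<Rightarrow> 'a mat \<Rightarrow> 'a vec" where
  "act p E J = vec (dim_col J) (\<lambda>k. \<Sum>i<dim_row E. act1 (p $ i) (row E i) J $ k)"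

definition act_mat :: "'a::field poly mat \<Rightarrow> 'a mat \<Rightarrow> 'a mat \<Rightarrow> 'a mat" where
  "act_mat P E J = mat (dim_row P) (dim_col J) (\<lambda>(i,k). act (row P i) E J $ k)"

definition is_interpolant :: "'a::field mat \<Rightarrow> 'a mat \<Rightarrow> 'a poly vec \<Rightarrow> bool" where
  "is_interpolant E J p \<longleftrightarrow> dim_vec p = dim_row E \<and> act p E J = 0\<^sub>v (dim_col J)"

definition is_interp_basis :: "'a::field mat \<Rightarrow> 'a mat \<Rightarrow> 'a poly mat \<Rightarrow> bool" where
  "is_interp_basis E J P \<longleftrightarrow>
     P \<in> carrier_mat (dim_row E) (dim_row E) \<and>
     (\<forall>i < dim_row P. is_interpolant E J (row P i)) \<and>
     (\<forall>p. is_interpolant E J p \<longrightarrow>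
        (\<exists>c. dim_vec c = dim_row P \<and> p = vec (dim_col P) (\<lambda>j. \<Sum>i<dim_row P. c $ i * P $$ (i,j)))) \<and>
     (\<forall>c. dim_vec c = dim_row P \<longrightarrow>
        vec (dim_col P) (\<lambda>j. \<Sum>i<dim_row P. c $ i * P $$ (i,j)) = 0\<^sub>v (dim_col P) \<longrightarrow> c = 0\<^sub>v (dim_row P))"

definition sdeg :: "int vec \<Rightarrow> 'a::zero poly vec \<Rightarrow> int" where
  "sdeg s r = Max {int (degree (r $ j)) + s $ j | j. j < dim_vec r \<and> r $ j \<noteq> 0}"

definition full_row_rank :: "'a::comm_ring_1 mat \<Rightarrow> bool" where
  "full_row_rank A \<longleftrightarrow> (\<forall>c. dim_vec c = dim_row A \<longrightarrow>
      vec (dim_col A) (\<lambda>j. \<Sum>i<dim_row A. c $ i * A $$ (i,j)) = 0\<^sub>v (dim_col A) \<longrightarrow> c = 0\<^sub>v (dim_row A))"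

definition leading_mat :: "int vec \<Rightarrow> 'a::zero poly mat \<Rightarrow> 'a mat" where
  "leading_mat s P = mat (dim_row P) (dim_col P)
     (\<lambda>(i,j). let e = sdeg s (row P i) - s $ j in if e < 0 then 0 else coeff (P $$ (i,j)) (nat e))"

definition s_reduced :: "int vec \<Rightarrow> 'a::field poly mat \<Rightarrow> bool" where
  "s_reduced s P \<longleftrightarrow> dim_vec s = dim_col P \<and> full_row_rank P \<and> full_row_rank (leading_mat s P)"

definition pivot_index :: "int vec \<Rightarrow> 'a::zero poly vec \<Rightarrow> nat" where
  "pivot_index s r = Max {j. j < dim_vec r \<and> r $ j \<noteq> 0 \<and> int (degree (r $ j)) + s $ j = sdeg s r}"

definition s_popov :: "int vec \<Rightarrow> 'a::field poly mat \<Rightarrow> bool" where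
  "s_popov s P \<longleftrightarrow> (\<exists>m. P \<in> carrier_mat m m \<and> dim_vec s = m \<and> det P \<noteq> 0 \<and>
     (\<forall>i<m. pivot_index s (row P i) = i \<and> lead_coeff (P $$ (i,i)) = 1) \<and>
     (\<forall>i<m. \<forall>j<m. i \<noteq> j \<longrightarrow> P $$ (i,j) = 0 \<or> degree (P $$ (i,j)) < degree (P $$ (j,j))))"

definition popov_interp_basis :: "int vec \<Rightarrow> 'a::field mat \<Rightarrow> 'a mat \<Rightarrow> 'a poly mat" where
  "popov_interp_basis s E J = (THE P. is_interp_basis E J P \<and> s_popov s P)"

definition diag_degrees :: "'a::zero poly mat \<Rightarrow> int vec" where
  "diag_degrees P = vec (dim_row P) (\<lambda>i. int (degree (P $$ (i,i))))"

definition minimal_degree :: "int vec \<Rightarrow> 'a::field mat \<Rightarrow> 'a mat \<Rightarrow> int vec" where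
  "minimal_degree s E J = diag_degrees (popov_interp_basis s E J)"

end

theory Submission imports Defs begin

lemma pam_dims[simp]: "dim_row (poly_at_mat p J) = dim_row J" "dim_col (poly_at_mat p J) = dim_col J"
  by (auto simp: poly_at_mat_def)

lemma pam_index:
  assumes "a < dim_row J" "b < dim_col J" "degree p < N"
  shows "poly_at_mat p J $$ (a,b) = (\<Sum>i<N. coeff p i * (J ^\<^sub>m i) $$ (a,b))"
proof -
  have "poly_at_mat p J $$ (a,b) = (\<Sum>i\<le>degree p. coeff p i * (J ^\<^sub>m i) $$ (a,b))"
    using assms by (simp add: poly_at_mat_def)
  also have "\<dots> = (\<Sum>i<N. coeff p i * (J ^\<^sub>m i) $$ (a,b))"
    by (rule sum.mono_neutral_left) (use assms in \<open>auto simp: coeff_eq_0\<close>)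
  finally show ?thesis .
qed

lemma pam_add: "poly_at_mat (p + q) J = poly_at_mat p J + poly_at_mat q J"
proof (rule eq_matI)
  fix a b assume ab: "a < dim_row (poly_at_mat p J + poly_at_mat q J)" "b < dim_col (poly_at_mat p J + poly_at_mat q J)"
  define N where "N = Suc (degree p + degree q + degree (p+q))"
  have "poly_at_mat (p+q) J $$ (a,b) = (\<Sum>i<N. coeff (p+q) i * (J ^\<^sub>m i) $$ (a,b))"
    using ab by (intro pam_index) (auto simp: N_def)
  also have "\<dots> = (\<Sum>i<N. coeff p i * (J ^\<^sub>m i) $$ (a,b)) + (\<Sum>i<N. coeff q i * (J ^\<^sub>m i) $$ (a,b))"
    by (simp add: distrib_right sum.distrib)
  also have "\<dots> = poly_at_mat p J $$ (a,b) + poly_at_mat q J $$ (a,b)"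
    using ab by (simp add: pam_index[of a J b p N] pam_index[of a J b q N] N_def)
  finally show "poly_at_mat (p + q) J $$ (a, b) = (poly_at_mat p J + poly_at_mat q J) $$ (a, b)"
    using ab by simp
qed auto

lemma pam_smult: "poly_at_mat (smult c p) J = c \<cdot>\<^sub>m poly_at_mat p J"
proof (rule eq_matI)
  fix a b assume ab: "a < dim_row (c \<cdot>\<^sub>m poly_at_mat p J)" "b < dim_col (c \<cdot>\<^sub>m poly_at_mat p J)"
  define N where "N = Suc (degree p + degree (smult c p))"
  have "poly_at_mat (smult c p) J $$ (a,b) = (\<Sum>i<N. coeff (smult c p) i * (J ^\<^sub>m i) $$ (a,b))"
    using ab by (intro pam_index) (auto simp: N_def)
  also have "\<dots> = c * (\<Sum>i<N. coeff p i * (J ^\<^sub>m i) $$ (a,b))"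
    by (simp add: sum_distrib_left mult.assoc)
  also have "\<dots> = c * poly_at_mat p J $$ (a,b)"
    using ab by (simp add: pam_index[of a J b p N] N_def)
  finally show "poly_at_mat (smult c p) J $$ (a, b) = (c \<cdot>\<^sub>m poly_at_mat p J) $$ (a, b)"
    using ab by simp
qed auto

lemma pam_zero: "poly_at_mat 0 J = 0\<^sub>m (dim_row J) (dim_col J)"
  by (rule eq_matI) (auto simp: poly_at_mat_def)

lemma pam_pCons:
  assumes J: "J \<in> carrier_mat n n"
  shows "poly_at_mat (pCons c p) J = c \<cdot>\<^sub>m 1\<^sub>m n + poly_at_mat p J * J"
proof (rule eq_matI)
  fix a b assume ab: "a < dim_row (c \<cdot>\<^sub>m 1\<^sub>m n + poly_at_mat p J * J)" "b < dim_col (c \<cdot>\<^sub>m 1\<^sub>m n + poly_at_mat p J * J)"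
  hence a: "a < n" and b: "b < n" using J by auto
  define N where "N = Suc (degree p)"
  have dp: "degree (pCons c p) < Suc N" unfolding N_def using degree_pCons_le[of c p] by linarith
  have "poly_at_mat (pCons c p) J $$ (a,b) = (\<Sum>i<Suc N. coeff (pCons c p) i * (J ^\<^sub>m i) $$ (a,b))"
    using a b J dp by (intro pam_index) auto
  also have "\<dots> = c * (1\<^sub>m n $$ (a,b)) + (\<Sum>i<N. coeff p i * (J ^\<^sub>m i * J) $$ (a,b))"
    unfolding sum.lessThan_Suc_shift using J by simp
  also have "(\<Sum>i<N. coeff p i * (J ^\<^sub>m i * J) $$ (a,b)) = (\<Sum>i<N. \<Sum>r<n. coeff p i * ((J ^\<^sub>m i) $$ (a,r) * J $$ (r,b)))"
    using J a b by (auto simp: scalar_prod_def sum_distrib_left atLeast0LessThan intro!: sum.cong)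
  also have "\<dots> = (\<Sum>r<n. (\<Sum>i<N. coeff p i * (J ^\<^sub>m i) $$ (a,r)) * J $$ (r,b))"
    by (subst sum.swap) (simp add: sum_distrib_right mult.assoc)
  also have "\<dots> = (\<Sum>r<n. poly_at_mat p J $$ (a,r) * J $$ (r,b))"
    using J a by (intro sum.cong refl) (subst pam_index[of _ _ _ _ N], auto simp: N_def)
  also have "\<dots> = (poly_at_mat p J * J) $$ (a,b)"
    using J a b by (simp add: scalar_prod_def atLeast0LessThan)
  finally show "poly_at_mat (pCons c p) J $$ (a, b) = (c \<cdot>\<^sub>m 1\<^sub>m n + poly_at_mat p J * J) $$ (a, b)"
    using a b J by simp
qed (use J in auto)

lemma smult_zero_mat_left: "(0::'b::comm_ring_1) \<cdot>\<^sub>m (1\<^sub>m n) = 0\<^sub>m n n"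
  by (rule eq_matI) auto

lemma pam_carrier: "J \<in> carrier_mat n n \<Longrightarrow> poly_at_mat p J \<in> carrier_mat n n"
  by auto

lemma pam_mult:
  assumes J: "J \<in> carrier_mat n n"
  shows "poly_at_mat (p * q) J = poly_at_mat p J * poly_at_mat q J"
proof (induction q rule: pCons_induct)
  case 0
  then show ?case using J by (auto simp: pam_zero)
next
  case (pCons c q)
  have P: "poly_at_mat p J \<in> carrier_mat n n" "poly_at_mat q J \<in> carrier_mat n n" using J by auto
  have "poly_at_mat (p * pCons c q) J = c \<cdot>\<^sub>m poly_at_mat p J + (0 \<cdot>\<^sub>m 1\<^sub>m n + poly_at_mat (p*q) J * J)"
    by (simp add: pam_add pam_smult pam_pCons[OF J])
  also have "\<dots> = c \<cdot>\<^sub>m poly_at_mat p J + poly_at_mat p J * poly_at_mat q J * J"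
    using P J by (simp add: pCons.IH assoc_mult_mat[of _ n n _ n _ n] smult_zero_mat_left)
  also have "\<dots> = poly_at_mat p J * (c \<cdot>\<^sub>m 1\<^sub>m n + poly_at_mat q J * J)"
  proof -
    have C: "c \<cdot>\<^sub>m 1\<^sub>m n \<in> carrier_mat n n" "poly_at_mat q J * J \<in> carrier_mat n n" using P J by auto
    have d1: "poly_at_mat p J * (c \<cdot>\<^sub>m 1\<^sub>m n + poly_at_mat q J * J) = poly_at_mat p J * (c \<cdot>\<^sub>m 1\<^sub>m n) + poly_at_mat p J * (poly_at_mat q J * J)"
      by (rule mult_add_distrib_mat[OF P(1) C])
    have d2: "poly_at_mat p J * (c \<cdot>\<^sub>m 1\<^sub>m n) = c \<cdot>\<^sub>m poly_at_mat p J"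
      using mult_smult_distrib[OF P(1) one_carrier_mat, of c] right_mult_one_mat[OF P(1)] by simp
    have d3: "poly_at_mat p J * poly_at_mat q J * J = poly_at_mat p J * (poly_at_mat q J * J)"
      by (rule assoc_mult_mat[OF P J])
    show ?thesis unfolding d1 d2 d3 ..
  qed
  also have "\<dots> = poly_at_mat p J * poly_at_mat (pCons c q) J"
    by (simp add: pam_pCons[OF J])
  finally show ?case .
qed

lemma pam_mult_index:
  assumes J: "J \<in> carrier_mat n n" and "l < n" "k < n"
  shows "poly_at_mat (p * q) J $$ (l,k) = (\<Sum>r<n. poly_at_mat p J $$ (l,r) * poly_at_mat q J $$ (r,k))"
  using assms by (simp add: pam_mult[OF J] scalar_prod_def atLeast0LessThan)

lemma pam_sum_index:
  assumes "finite A" "l < dim_row J" "k < dim_col J"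
  shows "poly_at_mat (\<Sum>i\<in>A. f i) J $$ (l,k) = (\<Sum>i\<in>A. poly_at_mat (f i) J $$ (l,k))"
  using assms by (induction A rule: finite_induct) (auto simp: pam_zero pam_add)

definition vm :: "'b::comm_semiring_0 vec \<Rightarrow> 'b mat \<Rightarrow> 'b vec" where
  "vm c P = vec (dim_col P) (\<lambda>j. \<Sum>i<dim_row P. c $ i * P $$ (i,j))"

lemma act_index:
  assumes "k < dim_col J"
  shows "act p E J $ k = (\<Sum>i<dim_row E. \<Sum>l<dim_col E. E $$ (i,l) * poly_at_mat (p$i) J $$ (l,k))"
  using assms by (simp add: act_def act1_def)

lemma act_dim[simp]: "dim_vec (act p E J) = dim_col J"
  by (simp add: act_def)

lemma act_mat_dims[simp]: "dim_row (act_mat P E J) = dim_row P" "dim_col (act_mat P E J) = dim_col J"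
  by (auto simp: act_mat_def)

lemma act_comp:
  assumes J: "J \<in> carrier_mat n n" and E: "dim_col E = n" and P: "dim_col P = dim_row E"
  shows "act (vm c P) E J = act c (act_mat P E J) J"
proof (rule eq_vecI)
  fix k assume "k < dim_vec (act c (act_mat P E J) J)"
  hence k: "k < n" using J by simp
  let ?m = "dim_row P" and ?e = "dim_row E"
  have "act (vm c P) E J $ k = (\<Sum>j<?e. \<Sum>l<n. E $$ (j,l) * poly_at_mat (\<Sum>i<?m. P $$ (i,j) * c $ i) J $$ (l,k))"
    using k J E P by (simp add: act_index vm_def mult.commute)
  also have "\<dots> = (\<Sum>j<?e. \<Sum>l<n. \<Sum>i<?m. \<Sum>r<n. E $$ (j,l) * (poly_at_mat (P $$ (i,j)) J $$ (l,r) * poly_at_mat (c $ i) J $$ (r,k)))"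
    using k J by (simp add: pam_sum_index pam_mult_index[OF J] sum_distrib_left)
  also have "\<dots> = (\<Sum>i<?m. \<Sum>r<n. \<Sum>j<?e. \<Sum>l<n. E $$ (j,l) * (poly_at_mat (P $$ (i,j)) J $$ (l,r) * poly_at_mat (c $ i) J $$ (r,k)))"
  proof -
    define T where "T = (\<lambda>j l i r. E $$ (j,l) * (poly_at_mat (P $$ (i,j)) J $$ (l,r) * poly_at_mat (c $ i) J $$ (r,k)))"
    have "(\<Sum>j<?e. \<Sum>l<n. \<Sum>i<?m. \<Sum>r<n. T j l i r) = (\<Sum>j<?e. \<Sum>i<?m. \<Sum>l<n. \<Sum>r<n. T j l i r)"
      by (rule sum.cong[OF refl], rule sum.swap)
    also have "\<dots> = (\<Sum>i<?m. \<Sum>j<?e. \<Sum>l<n. \<Sum>r<n. T j l i r)"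
      by (rule sum.swap)
    also have "\<dots> = (\<Sum>i<?m. \<Sum>j<?e. \<Sum>r<n. \<Sum>l<n. T j l i r)"
      by (rule sum.cong[OF refl], rule sum.cong[OF refl], rule sum.swap)
    also have "\<dots> = (\<Sum>i<?m. \<Sum>r<n. \<Sum>j<?e. \<Sum>l<n. T j l i r)"
      by (rule sum.cong[OF refl], rule sum.swap)
    finally show ?thesis unfolding T_def .
  qed
  also have "\<dots> = act c (act_mat P E J) J $ k"
    using k J E P by (simp add: act_index act_mat_def sum_distrib_left sum_distrib_right mult.assoc)
  finally show "act (vm c P) E J $ k = act c (act_mat P E J) J $ k" .
qed simp

context
  fixes J :: "'b::field mat" and h1 h2 \<sigma> :: nat
  assumes J: "J \<in> carrier_mat \<sigma> \<sigma>" and ut: "upper_triangular J" and hs: "h1 + h2 = \<sigma>"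
begin

lemma J_ut: "y < x \<Longrightarrow> x < \<sigma> \<Longrightarrow> J $$ (x,y) = 0"
  using ut J by (auto simp: upper_triangular_def)

lemma sum_split_h: "(\<Sum>r<\<sigma>. f r) = (\<Sum>r<h1. f r) + (\<Sum>r<h2. f (h1 + r))"
proof -
  have "(\<Sum>r<\<sigma>. f r) = (\<Sum>r<h1 + h2. f r)" using hs by simp
  also have "\<dots> = (\<Sum>r<h1. f r) + (\<Sum>r<h2. f (h1 + r))"
    by (induction h2) (auto simp: add.assoc)
  finally show ?thesis .
qed

lemma pow_ut: "y < x \<Longrightarrow> x < \<sigma> \<Longrightarrow> (J ^\<^sub>m i) $$ (x,y) = 0"
proof (induction i arbitrary: x y)
  case 0 then show ?case using J by simp
next
  case (Suc i)
  have "(J ^\<^sub>m Suc i) $$ (x,y) = (\<Sum>r<\<sigma>. (J ^\<^sub>m i) $$ (x,r) * J $$ (r,y))"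
    using Suc.prems J by (simp add: scalar_prod_def atLeast0LessThan)
  also have "\<dots> = 0"
  proof (rule sum.neutral, intro ballI)
    fix r assume r: "r \<in> {..<\<sigma>}"
    show "(J ^\<^sub>m i) $$ (x,r) * J $$ (r,y) = 0"
    proof (cases "r < x")
      case True then show ?thesis using Suc r by simp
    next
      case False then show ?thesis using Suc r J_ut[of y r] by simp
    qed
  qed
  finally show ?case .
qed

definition "blk1 = mat h1 h1 (\<lambda>(i,j). J $$ (i,j))"
definition "blk2 = mat h2 h2 (\<lambda>(i,j). J $$ (h1 + i, h1 + j))"

lemma J1_carrier: "blk1 \<in> carrier_mat h1 h1" and J2_carrier: "blk2 \<in> carrier_mat h2 h2"
  by (auto simp: blk1_def blk2_def)

lemma pow_b1: "x < h1 \<Longrightarrow> y < h1 \<Longrightarrow> (J ^\<^sub>m i) $$ (x,y) = (blk1 ^\<^sub>m i) $$ (x,y)"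
proof (induction i arbitrary: x y)
  case 0 then show ?case using J hs J1_carrier by simp
next
  case (Suc i)
  have "(J ^\<^sub>m Suc i) $$ (x,y) = (\<Sum>r<\<sigma>. (J ^\<^sub>m i) $$ (x,r) * J $$ (r,y))"
    using Suc.prems J hs by (simp add: scalar_prod_def atLeast0LessThan)
  also have "\<dots> = (\<Sum>r<h1. (J ^\<^sub>m i) $$ (x,r) * J $$ (r,y))"
    using Suc.prems hs by (simp add: sum_split_h J_ut)
  also have "\<dots> = (\<Sum>r<h1. (blk1 ^\<^sub>m i) $$ (x,r) * blk1 $$ (r,y))"
    using Suc by (intro sum.cong refl) (simp add: blk1_def)
  also have "\<dots> = (blk1 ^\<^sub>m Suc i) $$ (x,y)"
    using Suc.prems J1_carrier by (simp add: scalar_prod_def atLeast0LessThan)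
  finally show ?case .
qed

lemma pow_b2: "x < h2 \<Longrightarrow> y < h2 \<Longrightarrow> (J ^\<^sub>m i) $$ (h1+x,h1+y) = (blk2 ^\<^sub>m i) $$ (x,y)"
proof (induction i arbitrary: x y)
  case 0 then show ?case using J hs J2_carrier by simp
next
  case (Suc i)
  have "(J ^\<^sub>m Suc i) $$ (h1+x,h1+y) = (\<Sum>r<\<sigma>. (J ^\<^sub>m i) $$ (h1+x,r) * J $$ (r,h1+y))"
    using Suc.prems J hs by (simp add: scalar_prod_def atLeast0LessThan)
  also have "\<dots> = (\<Sum>r<h2. (J ^\<^sub>m i) $$ (h1+x,h1+r) * J $$ (h1+r,h1+y))"
    using Suc.prems hs by (simp add: sum_split_h pow_ut)
  also have "\<dots> = (\<Sum>r<h2. (blk2 ^\<^sub>m i) $$ (x,r) * blk2 $$ (r,y))"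
    using Suc by (intro sum.cong refl) (simp add: blk2_def)
  also have "\<dots> = (blk2 ^\<^sub>m Suc i) $$ (x,y)"
    using Suc.prems J2_carrier by (simp add: scalar_prod_def atLeast0LessThan)
  finally show ?case .
qed

lemma pam_ut: "y < x \<Longrightarrow> x < \<sigma> \<Longrightarrow> poly_at_mat p J $$ (x,y) = 0"
  using J by (subst pam_index[of _ _ _ _ "Suc (degree p)"]) (auto simp: pow_ut)

lemma pam_b1: "x < h1 \<Longrightarrow> y < h1 \<Longrightarrow> poly_at_mat p J $$ (x,y) = poly_at_mat p blk1 $$ (x,y)"
  using J hs J1_carrier
  by (subst pam_index[of _ _ _ _ "Suc (degree p)"], simp, simp, simp,
      subst pam_index[of _ _ _ _ "Suc (degree p)"], auto simp: pow_b1)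

lemma pam_b2: "x < h2 \<Longrightarrow> y < h2 \<Longrightarrow> poly_at_mat p J $$ (h1+x,h1+y) = poly_at_mat p blk2 $$ (x,y)"
  using J hs J2_carrier
  by (subst pam_index[of _ _ _ _ "Suc (degree p)"], simp, simp, simp,
      subst pam_index[of _ _ _ _ "Suc (degree p)"], auto simp: pow_b2)

lemma act_b1:
  assumes G: "dim_col G = \<sigma>" and k: "k < h1"
  shows "act c G J $ k = act c (mat (dim_row G) h1 (\<lambda>(i,j). G $$ (i,j))) blk1 $ k"
proof -
  have "act c G J $ k = (\<Sum>i<dim_row G. \<Sum>l<\<sigma>. G $$ (i,l) * poly_at_mat (c$i) J $$ (l,k))"
    using k hs J G by (simp add: act_index)
  also have "\<dots> = (\<Sum>i<dim_row G. \<Sum>l<h1. G $$ (i,l) * poly_at_mat (c$i) blk1 $$ (l,k))"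
    apply (rule sum.cong[OF refl]) apply (subst sum_split_h)
    using k hs by (simp add: pam_ut pam_b1)
  also have "\<dots> = act c (mat (dim_row G) h1 (\<lambda>(i,j). G $$ (i,j))) blk1 $ k"
    using k J1_carrier by (simp add: act_index)
  finally show ?thesis .
qed

lemma act_b2:
  assumes G: "dim_col G = \<sigma>" and k: "k < h2" and z: "\<And>i l. i < dim_row G \<Longrightarrow> l < h1 \<Longrightarrow> G $$ (i,l) = 0"
  shows "act c G J $ (h1 + k) = act c (mat (dim_row G) h2 (\<lambda>(i,j). G $$ (i,h1+j))) blk2 $ k"
proof -
  have "act c G J $ (h1+k) = (\<Sum>i<dim_row G. \<Sum>l<\<sigma>. G $$ (i,l) * poly_at_mat (c$i) J $$ (l,h1+k))"
    using k hs J G by (simp add: act_index)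
  also have "\<dots> = (\<Sum>i<dim_row G. \<Sum>l<h2. G $$ (i,h1+l) * poly_at_mat (c$i) blk2 $$ (l,k))"
    apply (rule sum.cong[OF refl]) apply (subst sum_split_h)
    using k hs z by (simp add: pam_b2)
  also have "\<dots> = act c (mat (dim_row G) h2 (\<lambda>(i,j). G $$ (i,h1+j))) blk2 $ k"
    using k J2_carrier by (simp add: act_index)
  finally show ?thesis .
qed

end


section \<open>Degree bounds\<close>

definition dle :: "'b::zero poly \<Rightarrow> int \<Rightarrow> bool" where
  "dle q B \<longleftrightarrow> q = 0 \<or> int (degree q) \<le> B"

lemma dle_0[simp]: "dle 0 B" by (simp add: dle_def)

lemma dle_mono: "dle q A \<Longrightarrow> A \<le> B \<Longrightarrow> dle q B"
  by (auto simp: dle_def)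

lemma dle_self: "dle q (int (degree q))" by (simp add: dle_def)

lemma dle_add: "dle (p::'b::comm_ring_1 poly) B \<Longrightarrow> dle q B \<Longrightarrow> dle (p + q) B"
proof -
  assume a: "dle p B" "dle q B"
  show ?thesis
  proof (cases "p + q = 0")
    case False
    have "degree (p+q) \<le> max (degree p) (degree q)" by (rule degree_add_le_max)
    moreover have "B \<ge> 0 \<or> (p = 0 \<and> q = 0)" using a by (auto simp: dle_def)
    ultimately show ?thesis using a False by (auto simp: dle_def)
  qed (simp)
qed

lemma dle_uminus: "dle (- (p::'b::comm_ring_1 poly)) B = dle p B"
  by (simp add: dle_def)

lemma dle_diff: "dle (p::'b::comm_ring_1 poly) B \<Longrightarrow> dle q B \<Longrightarrow> dle (p - q) B"
  using dle_add[of p B "-q"] by (simp add: dle_uminus)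

lemma dle_sum: "finite A \<Longrightarrow> (\<And>i. i \<in> A \<Longrightarrow> dle (f i :: 'b::comm_ring_1 poly) B) \<Longrightarrow> dle (\<Sum>i\<in>A. f i) B"
  by (induction A rule: finite_induct) (auto intro: dle_add)

lemma dle_mult: "dle (p::'b::comm_ring_1 poly) A \<Longrightarrow> dle q B \<Longrightarrow> dle (p * q) (A + B)"
proof -
  assume a: "dle p A" "dle q B"
  show ?thesis
  proof (cases "p = 0 \<or> q = 0")
    case False
    have "degree (p*q) \<le> degree p + degree q" by (rule degree_mult_le)
    then show ?thesis using a False by (auto simp: dle_def)
  qed auto
qed

lemma dle_top:
  fixes q r :: "'b::comm_ring_1 poly"
  assumes "q \<noteq> 0" "dle r (int (degree q) - 1)"
  shows "q + r \<noteq> 0 \<and> degree (q + r) = degree q \<and> lead_coeff (q + r) = lead_coeff q"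
proof (cases "r = 0")
  case False
  hence lt: "degree r < degree q" using assms by (auto simp: dle_def)
  have d: "degree (q + r) = degree q" using lt by (simp add: degree_add_eq_left)
  have "lead_coeff (q + r) = lead_coeff q" using lt d by (simp add: coeff_eq_0)
  moreover have "q + r \<noteq> 0" using d lt by auto
  ultimately show ?thesis using d by simp
qed (use assms in simp)

lemma argmax_ex:
  fixes f :: "nat \<Rightarrow> int"
  assumes "finite S" "S \<noteq> {}"
  shows "\<exists>k\<in>S. (\<forall>l\<in>S. f l \<le> f k) \<and> (\<forall>l\<in>S. k < l \<longrightarrow> f l < f k)"
proof -
  define \<mu> where "\<mu> = Max (f ` S)"
  define T where "T = {l\<in>S. f l = \<mu>}"
  have \<mu>: "\<mu> \<in> f ` S" "\<And>l. l \<in> S \<Longrightarrow> f l \<le> \<mu>" using assms by (auto simp: \<mu>_def)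
  have T: "finite T" "T \<noteq> {}" using assms \<mu>(1) by (auto simp: T_def)
  define k where "k = Max T"
  have k: "k \<in> T" "\<And>l. l \<in> T \<Longrightarrow> l \<le> k" using T by (auto simp: k_def)
  show ?thesis
  proof (intro bexI conjI ballI impI)
    show "k \<in> S" using k by (simp add: T_def)
    fix l assume l: "l \<in> S"
    show "f l \<le> f k" using k l \<mu> by (simp add: T_def)
    assume "k < l"
    then have "l \<notin> T" using k(2) by force
    then show "f l < f k" using l \<mu> k by (force simp: T_def)
  qed
qed

section \<open>Diagonal weak Popov\<close>

definition prow :: "int vec \<Rightarrow> 'b::zero poly vec \<Rightarrow> nat \<Rightarrow> bool" where
  "prow s r i \<longleftrightarrow> i < dim_vec r \<and> r$i \<noteq> 0 \<and>
    (\<forall>j<dim_vec r. r$j \<noteq> 0 \<longrightarrow> int (degree (r$j)) + s$j \<le> int (degree (r$i)) + s$i) \<and>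
    (\<forall>j<dim_vec r. i < j \<longrightarrow> r$j \<noteq> 0 \<longrightarrow> int (degree (r$j)) + s$j < int (degree (r$i)) + s$i)"

definition dwp :: "int vec \<Rightarrow> 'b::zero poly mat \<Rightarrow> bool" where
  "dwp s P \<longleftrightarrow> (\<forall>i<dim_row P. prow s (row P i) i)"

lemma prow_unique: "prow s r i \<Longrightarrow> prow s r k \<Longrightarrow> i = k"
  unfolding prow_def by (metis linorder_neqE_nat not_less)

lemma dwpD:
  assumes "dwp s P" "i < dim_row P"
  shows "i < dim_col P" "P $$ (i,i) \<noteq> 0"
    "\<And>j. j < dim_col P \<Longrightarrow> P $$ (i,j) \<noteq> 0 \<Longrightarrow> int (degree (P $$ (i,j))) + s$j \<le> int (degree (P $$ (i,i))) + s$i"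
    "\<And>j. j < dim_col P \<Longrightarrow> i < j \<Longrightarrow> P $$ (i,j) \<noteq> 0 \<Longrightarrow> int (degree (P $$ (i,j))) + s$j < int (degree (P $$ (i,i))) + s$i"
  using assms by (auto simp: dwp_def prow_def)

lemma dwp_dle:
  assumes "dwp s P" "i < dim_row P" "j < dim_col P"
  shows "dle (P $$ (i,j)) (int (degree (P $$ (i,i))) + s$i - s$j)"
    "i < j \<Longrightarrow> dle (P $$ (i,j)) (int (degree (P $$ (i,i))) + s$i - s$j - 1)"
  using dwpD[OF assms(1,2)] assms(3) unfolding dle_def by force+

lemma vm_index: "j < dim_col P \<Longrightarrow> vm c P $ j = (\<Sum>i<dim_row P. c $ i * P $$ (i,j))"
  by (simp add: vm_def)

lemma vm_dim[simp]: "dim_vec (vm c P) = dim_col P" by (simp add: vm_def)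

lemma pdp:
  fixes P :: "'b::idom poly mat"
  assumes P: "P \<in> carrier_mat m m" and W: "dwp s P" and c: "dim_vec c = m"
    and k: "k < m" "c$k \<noteq> 0"
    and hmax: "\<And>l. l < m \<Longrightarrow> c$l \<noteq> 0 \<Longrightarrow> int (degree (c$l)) + s$l + int (degree (P$$(l,l))) \<le> int (degree (c$k)) + s$k + int (degree (P$$(k,k)))"
    and hstr: "\<And>l. l < m \<Longrightarrow> k < l \<Longrightarrow> c$l \<noteq> 0 \<Longrightarrow> int (degree (c$l)) + s$l + int (degree (P$$(l,l))) < int (degree (c$k)) + s$k + int (degree (P$$(k,k)))"
  shows "prow s (vm c P) k \<and> degree (vm c P $ k) = degree (c$k) + degree (P$$(k,k))
     \<and> lead_coeff (vm c P $ k) = lead_coeff (c$k) * lead_coeff (P$$(k,k))"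
proof -
  define f where "f l = int (degree (c$l)) + s$l + int (degree (P$$(l,l)))" for l
  define \<mu> where "\<mu> = f k"
  have Pr: "dim_row P = m" "dim_col P = m" using P by auto
  have tb: "dle (c$l * P$$(l,j)) (f l - s$j)" if "l < m" "j < m" for l j
  proof (cases "c$l = 0")
    case False
    have "dle (c$l * P$$(l,j)) (int (degree (c$l)) + (int (degree (P $$ (l,l))) + s$l - s$j))"
      by (rule dle_mult[OF dle_self dwp_dle(1)]) (use W that Pr in auto)
    then show ?thesis by (simp add: f_def algebra_simps)
  qed simp
  have tbs: "dle (c$l * P$$(l,j)) (f l - s$j - 1)" if "l < m" "j < m" "l < j" for l j
  proof (cases "c$l = 0")
    case False
    have "dle (c$l * P$$(l,j)) (int (degree (c$l)) + (int (degree (P $$ (l,l))) + s$l - s$j - 1))"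
      by (rule dle_mult[OF dle_self dwp_dle(2)]) (use W that Pr in auto)
    then show ?thesis by (simp add: f_def algebra_simps)
  qed simp
  have fle: "c$l \<noteq> 0 \<Longrightarrow> l < m \<Longrightarrow> f l \<le> \<mu>" for l using hmax by (simp add: f_def \<mu>_def)
  have flt: "c$l \<noteq> 0 \<Longrightarrow> l < m \<Longrightarrow> k < l \<Longrightarrow> f l < \<mu>" for l using hstr by (simp add: f_def \<mu>_def)
  have C1: "dle (vm c P $ j) (\<mu> - s$j)" if j: "j < m" for j
    unfolding vm_index[of j P c, OF j[folded Pr(2)]] Pr
  proof (rule dle_sum, simp)
    fix l assume "l \<in> {..<m}"
    hence l: "l < m" by simp
    show "dle (c $ l * P $$ (l, j)) (\<mu> - s $ j)"
    proof (cases "c$l = 0")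
      case False then show ?thesis using tb[OF l j] fle[OF False l] by (auto intro: dle_mono)
    qed simp
  qed
  have C2: "dle (vm c P $ j) (\<mu> - s$j - 1)" if j: "j < m" "k < j" for j
    unfolding vm_index[of j P c, OF j(1)[folded Pr(2)]] Pr
  proof (rule dle_sum, simp)
    fix l assume "l \<in> {..<m}"
    hence l: "l < m" by simp
    show "dle (c $ l * P $$ (l, j)) (\<mu> - s $ j - 1)"
    proof (cases "c$l = 0")
      case False
      show ?thesis
      proof (cases "l < j")
        case True then show ?thesis using tbs[OF l j(1) True] fle[OF False l] by (auto intro: dle_mono)
      next
        case False
        then have "k < l" using j by simp
        then show ?thesis using tb[OF l j(1)] flt[OF \<open>c$l \<noteq> 0\<close> l] by (auto intro: dle_mono)
      qed
    qed simp
  qed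
  have Pkk: "P$$(k,k) \<noteq> 0" using dwpD(2)[OF W] k Pr by simp
  have q0: "c$k * P$$(k,k) \<noteq> 0" using k Pkk by simp
  have dq: "degree (c$k * P$$(k,k)) = degree (c$k) + degree (P$$(k,k))"
    using k Pkk by (simp add: degree_mult_eq)
  have split: "vm c P $ k = c$k * P$$(k,k) + (\<Sum>l\<in>{..<m}-{k}. c$l * P$$(l,k))"
    using k Pr by (simp add: vm_index sum.remove[of "{..<m}" k])
  have rest: "dle (\<Sum>l\<in>{..<m}-{k}. c$l * P$$(l,k)) (int (degree (c$k * P$$(k,k))) - 1)"
  proof (rule dle_sum, simp)
    fix l assume "l \<in> {..<m}-{k}"
    hence l: "l < m" "l \<noteq> k" by auto
    have e: "int (degree (c$k * P$$(k,k))) - 1 = \<mu> - s$k - 1" using dq by (simp add: \<mu>_def f_def)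
    show "dle (c $ l * P $$ (l, k)) (int (degree (c$k * P$$(k,k))) - 1)"
      unfolding e
    proof (cases "c$l = 0")
      case False
      show "dle (c $ l * P $$ (l, k)) (\<mu> - s$k - 1)"
      proof (cases "l < k")
        case True then show ?thesis using tbs[OF l(1) k(1) True] fle[OF False l(1)] by (auto intro: dle_mono)
      next
        case False
        then have "k < l" using l by simp
        then show ?thesis using tb[OF l(1) k(1)] flt[OF \<open>c$l \<noteq> 0\<close> l(1)] by (auto intro: dle_mono)
      qed
    qed simp
  qed
  from dle_top[OF q0 rest] split
  have top: "vm c P $ k \<noteq> 0" "degree (vm c P $ k) = degree (c$k) + degree (P$$(k,k))"
    "lead_coeff (vm c P $ k) = lead_coeff (c$k) * lead_coeff (P$$(k,k))"
    by (auto simp: dq coeff_mult_degree_sum)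
  have dk: "int (degree (vm c P $ k)) + s$k = \<mu>" using top(2) by (simp add: \<mu>_def f_def)
  have "prow s (vm c P) k"
    unfolding prow_def
  proof (intro conjI allI impI)
    show "k < dim_vec (vm c P)" using k Pr by simp
    show "vm c P $ k \<noteq> 0" by (rule top(1))
    fix j assume j: "j < dim_vec (vm c P)" "vm c P $ j \<noteq> 0"
    then show "int (degree (vm c P $ j)) + s $ j \<le> int (degree (vm c P $ k)) + s $ k"
      using C1[of j] Pr dk by (auto simp: dle_def)
  next
    fix j assume j: "j < dim_vec (vm c P)" "k < j" "vm c P $ j \<noteq> 0"
    then show "int (degree (vm c P $ j)) + s $ j < int (degree (vm c P $ k)) + s $ k"
      using C2[of j] Pr dk by (auto simp: dle_def)
  qed
  then show ?thesis using top by simp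
qed


lemma pdp_ex:
  fixes P :: "'b::idom poly mat"
  assumes P: "P \<in> carrier_mat m m" and W: "dwp s P" and c: "dim_vec c = m" and c0: "c \<noteq> 0\<^sub>v m"
  shows "\<exists>k<m. c$k \<noteq> 0 \<and> prow s (vm c P) k \<and> degree (vm c P $ k) = degree (c$k) + degree (P$$(k,k))
     \<and> lead_coeff (vm c P $ k) = lead_coeff (c$k) * lead_coeff (P$$(k,k))"
proof -
  define S where "S = {l. l < m \<and> c$l \<noteq> 0}"
  have "S \<noteq> {}"
  proof
    assume "S = {}"
    then have "c = 0\<^sub>v m" using c by (intro eq_vecI) (auto simp: S_def)
    then show False using c0 by simp
  qed
  moreover have "finite S" by (simp add: S_def)
  ultimately obtain k where k: "k \<in> S"
    and h1: "\<And>l. l \<in> S \<Longrightarrow> int (degree (c$l)) + s$l + int (degree (P$$(l,l))) \<le> int (degree (c$k)) + s$k + int (degree (P$$(k,k)))"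
    and h2: "\<And>l. l \<in> S \<Longrightarrow> k < l \<Longrightarrow> int (degree (c$l)) + s$l + int (degree (P$$(l,l))) < int (degree (c$k)) + s$k + int (degree (P$$(k,k)))"
    using argmax_ex[of S "\<lambda>l. int (degree (c$l)) + s$l + int (degree (P$$(l,l)))"] by blast
  have "prow s (vm c P) k \<and> degree (vm c P $ k) = degree (c$k) + degree (P$$(k,k))
     \<and> lead_coeff (vm c P $ k) = lead_coeff (c$k) * lead_coeff (P$$(k,k))"
    by (rule pdp[OF P W c]) (use k h1 h2 in \<open>auto simp: S_def\<close>)
  then show ?thesis using k by (auto simp: S_def)
qed

lemma vm_add: "dim_vec c = dim_row P \<Longrightarrow> dim_vec d = dim_row P \<Longrightarrow> vm (c + d) P = vm c P + vm d P"
  by (rule eq_vecI) (auto simp: vm_def distrib_right sum.distrib)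

lemma vm_zero: "vm (0\<^sub>v (dim_row P)) P = 0\<^sub>v (dim_col P)"
  by (rule eq_vecI) (auto simp: vm_def)

lemma vm_unit:
  assumes "j0 < dim_row P" "l < dim_col P"
  shows "vm (vec (dim_row P) (\<lambda>i. if i = j0 then x else 0)) P $ l = x * P $$ (j0, l)"
proof -
  have "vm (vec (dim_row P) (\<lambda>i. if i = j0 then x else 0)) P $ l = (\<Sum>i<dim_row P. (if i = j0 then x else 0) * P $$ (i, l))"
    using assms unfolding vm_def by simp
  also have "\<dots> = (\<Sum>i<dim_row P. (if i = j0 then x * P $$ (i, l) else 0))"
    by (rule sum.cong) auto
  also have "\<dots> = x * P $$ (j0, l)" using assms by simp
  finally show ?thesis .
qed

lemma dle_cancel:
  fixes q r :: "'b::comm_ring_1 poly"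
  assumes "degree r = degree q" "lead_coeff r = lead_coeff q"
  shows "dle (q - r) (int (degree q) - 1)"
proof (cases "q - r = 0")
  case False
  have le: "degree (q - r) \<le> degree q" using degree_diff_le[of q "degree q" r] assms by simp
  have "coeff (q - r) (degree q) = 0" using assms by simp
  then have "degree (q - r) \<noteq> degree q" using False leading_coeff_0_iff by metis
  then show ?thesis using le False by (auto simp: dle_def)
qed (simp)

section \<open>Division\<close>

context
  fixes P :: "'b::field poly mat" and m :: nat and s :: "int vec"
  assumes P: "P \<in> carrier_mat m m" and W: "dwp s P" and monic: "\<And>j. j < m \<Longrightarrow> lead_coeff (P$$(j,j)) = 1"
begin

definition "bad p l \<longleftrightarrow> \<not> dle (p$l) (int (degree (P$$(l,l))) - 1)"
definition "vv p l = int (degree (p$l)) + s$l"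
definition "LB = - (\<Sum>l<m. \<bar>s$l\<bar>)"

lemma bad_lb: "l < m \<Longrightarrow> bad p l \<Longrightarrow> LB \<le> vv p l"
proof -
  assume l: "l < m" "bad p l"
  have "\<bar>s$l\<bar> \<le> (\<Sum>l<m. \<bar>s$l\<bar>)" using l by (intro member_le_sum) auto
  moreover have "int (degree (P$$(l,l))) \<le> int (degree (p$l))" using l by (auto simp: bad_def dle_def)
  ultimately show ?thesis by (simp add: LB_def vv_def)
qed

lemma div_step:
  "\<forall>\<nu> j p. nat (\<nu> - LB) * (m+1) + j = N \<longrightarrow> dim_vec p = m \<longrightarrow>
     (\<forall>l<m. bad p l \<longrightarrow> vv p l < \<nu> \<or> (vv p l = \<nu> \<and> l < j)) \<longrightarrow>
     (\<exists>c. dim_vec c = m \<and> (\<forall>l<m. \<not> bad (p - vm c P) l))"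
proof (induction N rule: less_induct)
  case (less N)
  have Pr: "dim_row P = m" "dim_col P = m" using P by auto
  show ?case
  proof (intro allI impI)
    fix \<nu> j and p :: "'b poly vec"
    assume N: "nat (\<nu> - LB) * (m+1) + j = N" and p: "dim_vec p = m"
      and hyp: "\<forall>l<m. bad p l \<longrightarrow> vv p l < \<nu> \<or> (vv p l = \<nu> \<and> l < j)"
    show "\<exists>c. dim_vec c = m \<and> (\<forall>l<m. \<not> bad (p - vm c P) l)"
    proof (cases "\<exists>l<m. bad p l")
      case False
      have "p - vm (0\<^sub>v m) P = p" using vm_zero[of P] Pr p by auto
      then show ?thesis using False by (intro exI[of _ "0\<^sub>v m"]) auto
    next
      case True
      define S where "S = {l. l < m \<and> bad p l}"
      have "S \<noteq> {}" "finite S" using True by (auto simp: S_def)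
      then obtain j0 where j0S: "j0 \<in> S" and jm1: "\<And>l. l \<in> S \<Longrightarrow> vv p l \<le> vv p j0"
        and jm2: "\<And>l. l \<in> S \<Longrightarrow> j0 < l \<Longrightarrow> vv p l < vv p j0"
        using argmax_ex[of S "vv p"] by blast
      have j0: "j0 < m" "bad p j0" using j0S by (auto simp: S_def)
      define \<nu>0 where "\<nu>0 = vv p j0"
      have lt: "\<nu>0 < \<nu> \<or> (\<nu>0 = \<nu> \<and> j0 < j)" using hyp j0 by (simp add: \<nu>0_def)
      have lb: "LB \<le> \<nu>0" using bad_lb j0 by (simp add: \<nu>0_def)
      define N0 where "N0 = nat (\<nu>0 - LB) * (m+1) + j0"
      have "N0 < N"
      proof (cases "\<nu>0 < \<nu>")
        case True
        have a: "nat (\<nu>0 - LB) + 1 \<le> nat (\<nu> - LB)" using True lb by linarith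
        have "N0 < (nat (\<nu>0 - LB) + 1) * (m+1)" using j0 by (simp add: N0_def)
        also have "\<dots> \<le> nat (\<nu> - LB) * (m+1)" using a by (rule mult_le_mono1)
        finally show ?thesis using N by simp
      next
        case False then show ?thesis using lt N by (simp add: N0_def)
      qed
      define a where "a = lead_coeff (p$j0)"
      define e where "e = degree (p$j0) - degree (P$$(j0,j0))"
      have p0: "p$j0 \<noteq> 0" and dge: "degree (P$$(j0,j0)) \<le> degree (p$j0)"
        using j0 by (auto simp: bad_def dle_def)
      have ee: "int e + int (degree (P$$(j0,j0))) + s$j0 = \<nu>0"
        using dge by (simp add: e_def \<nu>0_def vv_def)
      define u where "u = vec m (\<lambda>i. if i = j0 then monom a e else 0)"
      define p' where "p' = p - vm u P"
      have p'i: "p' $ l = p $ l - monom a e * P$$(j0,l)" if "l < m" for l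
        using vm_unit[of j0 P l "monom a e"] that j0 Pr p by (simp add: p'_def u_def)
      have gb: "dle (monom a e * P$$(j0,l)) (\<nu>0 - s$l)" if "l < m" for l
      proof -
        have "dle (monom a e * P$$(j0,l)) (int e + (int (degree (P $$ (j0,j0))) + s$j0 - s$l))"
          by (rule dle_mult) (use dwp_dle(1)[OF W] that j0 Pr degree_monom_le[of a e] in \<open>auto simp: dle_def\<close>)
        then show ?thesis using ee by (simp add: algebra_simps)
      qed
      have gbs: "dle (monom a e * P$$(j0,l)) (\<nu>0 - s$l - 1)" if "l < m" "j0 < l" for l
      proof -
        have "dle (monom a e * P$$(j0,l)) (int e + (int (degree (P $$ (j0,j0))) + s$j0 - s$l - 1))"
          by (rule dle_mult) (use dwp_dle(2)[OF W] that j0 Pr degree_monom_le[of a e] in \<open>auto simp: dle_def\<close>)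
        then show ?thesis using ee by (simp add: algebra_simps)
      qed
      have hyp': "\<forall>l<m. bad p' l \<longrightarrow> vv p' l < \<nu>0 \<or> (vv p' l = \<nu>0 \<and> l < j0)"
      proof (intro allI impI)
        fix l assume l: "l < m" and b': "bad p' l"
        have b'': "p'$l \<noteq> 0" "int (degree (P$$(l,l))) \<le> int (degree (p'$l))"
          using b' by (auto simp: bad_def dle_def)
        show "vv p' l < \<nu>0 \<or> (vv p' l = \<nu>0 \<and> l < j0)"
        proof (cases "l = j0")
          case True
          have Pm: "P$$(j0,j0) \<noteq> 0" using dwpD(2)[OF W] j0 Pr by simp
          have am: "a \<noteq> 0" using p0 by (simp add: a_def)
          have dg: "degree (monom a e * P$$(j0,j0)) = degree (p$j0)"
            using am Pm dge by (simp add: degree_mult_eq degree_monom_eq e_def)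
          have lc: "lead_coeff (monom a e * P$$(j0,j0)) = lead_coeff (p$j0)"
          proof -
            have "lead_coeff (monom a e) = a" using am by (simp add: degree_monom_eq)
            then show ?thesis using monic[OF j0(1)] by (simp add: lead_coeff_mult a_def)
          qed
          have "dle (p'$j0) (int (degree (p$j0)) - 1)"
            using dle_cancel[OF dg lc] p'i[OF j0(1)] by simp
          then have "vv p' j0 < \<nu>0" using b'' True by (auto simp: dle_def vv_def \<nu>0_def)
          then show ?thesis using True by simp
        next
          case False
          define B where "B = (if j0 < l then \<nu>0 - s$l - 1 else \<nu>0 - s$l)"
          have gB: "dle (monom a e * P$$(j0,l)) B" using gb[OF l] gbs[OF l] by (simp add: B_def)
          have pB: "dle (p$l) (max (int (degree (P$$(l,l))) - 1) B)"
          proof (cases "bad p l")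
            case True
            then have "l \<in> S" using l by (simp add: S_def)
            then have "vv p l \<le> \<nu>0" "j0 < l \<Longrightarrow> vv p l < \<nu>0" using jm1 jm2 by (auto simp: \<nu>0_def)
            then have "dle (p$l) B" using True by (auto simp: B_def bad_def dle_def vv_def)
            then show ?thesis by (rule dle_mono) simp
          next
            case False then show ?thesis by (auto simp: bad_def intro: dle_mono)
          qed
          have "dle (p'$l) (max (int (degree (P$$(l,l))) - 1) B)"
            unfolding p'i[OF l] by (rule dle_diff[OF pB dle_mono[OF gB]]) simp
          then have "int (degree (p'$l)) \<le> B" using b'' by (auto simp: dle_def)
          then show ?thesis using False by (cases "j0 < l") (auto simp: B_def vv_def)
        qed
      qed
      have dp': "dim_vec p' = m" using p Pr by (simp add: p'_def)
      obtain c' where c': "dim_vec c' = m" "\<forall>l<m. \<not> bad (p' - vm c' P) l"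
        using less.IH[OF \<open>N0 < N\<close>] dp' hyp' N0_def by blast
      have du: "dim_vec u = m" by (simp add: u_def)
      have eq: "p - vm (c' + u) P = p' - vm c' P"
        using vm_add[of c' P u] c' du Pr p by (auto simp: p'_def)
      show ?thesis
        by (rule exI[of _ "c' + u"]) (use c' du eq in auto)
    qed
  qed
qed

lemma division:
  assumes p: "dim_vec p = m"
  shows "\<exists>c. dim_vec c = m \<and> (\<forall>l<m. dle ((p - vm c P) $ l) (int (degree (P$$(l,l))) - 1))"
proof -
  define \<nu> where "\<nu> = (\<Sum>l<m. int (degree (p$l)) + \<bar>s$l\<bar>) + 1"
  have "\<forall>l<m. bad p l \<longrightarrow> vv p l < \<nu> \<or> (vv p l = \<nu> \<and> l < 0)"
  proof (intro allI impI)
    fix l assume l: "l < m"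
    have "int (degree (p$l)) + \<bar>s$l\<bar> \<le> (\<Sum>l<m. int (degree (p$l)) + \<bar>s$l\<bar>)"
      using l by (intro member_le_sum) auto
    then show "vv p l < \<nu> \<or> (vv p l = \<nu> \<and> l < 0)" by (simp add: vv_def \<nu>_def)
  qed
  then obtain c where "dim_vec c = m" "\<forall>l<m. \<not> bad (p - vm c P) l"
    using div_step p by blast
  then show ?thesis by (auto simp: bad_def)
qed

end


section \<open>Determinant\<close>

lemma degree_signof_mult': "degree (signof p * (q :: 'b::idom poly)) = degree q"
  by (cases p rule: sign_cases) simp_all

lemma signof_mult_eq0: "(signof p * (q :: 'b::idom poly) = 0) = (q = 0)"
  by (cases p rule: sign_cases) simp_all

lemma dle_prod: "finite A \<Longrightarrow> (\<And>i. i \<in> A \<Longrightarrow> dle (f i :: 'b::comm_ring_1 poly) (b i)) \<Longrightarrow> dle (\<Prod>i\<in>A. f i) (\<Sum>i\<in>A. b i)"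
proof (induction A rule: finite_induct)
  case empty then show ?case by (simp add: dle_def)
next
  case (insert x F)
  then show ?case using dle_mult[of "f x" "b x" "\<Prod>i\<in>F. f i" "\<Sum>i\<in>F. b i"] by simp
qed

lemma perm_le_id:
  fixes p :: "nat \<Rightarrow> nat"
  assumes p: "p permutes {0..<m}" and le: "\<And>i. i < m \<Longrightarrow> p i \<le> i"
  shows "p = id"
proof -
  have "p i = i" if "i < m" for i
    using that
  proof (induction i rule: less_induct)
    case (less i)
    show ?case
    proof (rule ccontr)
      assume "p i \<noteq> i"
      then have lt: "p i < i" using le[OF less.prems] by simp
      then have "p (p i) = p i" using less by simp
      then show False using permutes_inj[OF p] \<open>p i \<noteq> i\<close> by (metis injD)
    qed
  qed
  moreover have "p i = i" if "\<not> i < m" for i using permutes_not_in[OF p] that by simp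
  ultimately show ?thesis by (auto simp: fun_eq_iff)
qed

lemma det_dwp:
  fixes P :: "'b::field poly mat"
  assumes P: "P \<in> carrier_mat m m" and W: "dwp s P" and monic: "\<And>j. j < m \<Longrightarrow> lead_coeff (P$$(j,j)) = 1"
  shows "det P \<noteq> 0"
proof -
  have Pr: "dim_row P = m" "dim_col P = m" using P by auto
  define N where "N = (\<Sum>i\<in>{0..<m}. degree (P$$(i,i)))"
  have nz: "P$$(i,i) \<noteq> 0" if "i < m" for i using dwpD(2)[OF W] that Pr by simp
  have other: "coeff (signof p * (\<Prod>i = 0..<m. P $$ (i, p i))) N = 0" if p: "p permutes {0..<m}" "p \<noteq> id" for p
  proof -
    obtain i0 where i0: "i0 < m" "i0 < p i0" using perm_le_id[OF p(1)] p(2) by force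
    show ?thesis
    proof (cases "\<exists>i\<in>{0..<m}. P $$ (i, p i) = 0")
      case True
      then have "(\<Prod>i = 0..<m. P $$ (i, p i)) = 0" by (intro prod_zero) auto
      then show ?thesis by (metis coeff_0 mult_zero_right)
    next
      case False
      define b where "b i = int (degree (P$$(i,i))) + s$i - s$(p i) - (if i = i0 then 1 else 0)" for i
      have pi: "p i < m" if "i < m" for i using permutes_in_image[OF p(1)] that by simp
      have "dle (\<Prod>i = 0..<m. P $$ (i, p i)) (\<Sum>i = 0..<m. b i)"
      proof (rule dle_prod, simp)
        fix i assume "i \<in> {0..<m}"
        then have i: "i < m" by simp
        show "dle (P $$ (i, p i)) (b i)"
        proof (cases "i = i0")
          case True then show ?thesis using dwp_dle(2)[OF W, of i "p i"] i Pr pi[OF i] i0 by (simp add: b_def)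
        next
          case False then show ?thesis using dwp_dle(1)[OF W, of i "p i"] i Pr pi[OF i] by (simp add: b_def)
        qed
      qed
      moreover have "(\<Sum>i = 0..<m. b i) = int N - 1"
      proof -
        have sp: "(\<Sum>i = 0..<m. s$(p i)) = (\<Sum>i = 0..<m. s$i)"
          using sum.reindex[OF permutes_inj_on[OF p(1), of "{0..<m}"], of "\<lambda>i. s$i"]
            permutes_image[OF p(1)] by (simp add: comp_def)
        have "(\<Sum>i = 0..<m. b i) = (\<Sum>i = 0..<m. int (degree (P$$(i,i)))) + (\<Sum>i = 0..<m. s$i) - (\<Sum>i = 0..<m. s$(p i)) - (\<Sum>i = 0..<m. (if i = i0 then 1 else 0))"
          by (simp add: b_def sum_subtractf sum.distrib)
        also have "\<dots> = int N - 1" using sp i0 by (simp add: N_def)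
        finally show ?thesis .
      qed
      ultimately have d: "dle (\<Prod>i = 0..<m. P $$ (i, p i)) (int N - 1)" by simp
      have "(\<Prod>i = 0..<m. P $$ (i, p i)) = 0 \<or> degree (\<Prod>i = 0..<m. P $$ (i, p i)) < N"
        using d unfolding dle_def by linarith
      then have "coeff (\<Prod>i = 0..<m. P $$ (i, p i)) N = 0"
        by (metis coeff_0 coeff_eq_0)
      then have "coeff (signof p * (\<Prod>i = 0..<m. P $$ (i, p i))) N = 0"
        by (cases p rule: sign_cases) simp_all
      then show ?thesis .
    qed
  qed
  have idt: "coeff (signof (id::nat\<Rightarrow>nat) * (\<Prod>i = 0..<m. P $$ (i, id i))) N = 1"
  proof -
    have "degree (\<Prod>i = 0..<m. P $$ (i, i)) = N"
      unfolding N_def by (rule degree_prod_sum_eq) (use nz in auto)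
    then have "coeff (\<Prod>i = 0..<m. P $$ (i, i)) N = (\<Prod>i = 0..<m. lead_coeff (P$$(i,i)))"
      by (metis lead_coeff_prod)
    also have "\<dots> = 1" using monic by simp
    finally show ?thesis by simp
  qed
  have "coeff (det P) N = (\<Sum>p\<in>{p. p permutes {0..<m}}. coeff (signof p * (\<Prod>i = 0..<m. P $$ (i, p i))) N)"
    by (simp add: det_def'[OF P] coeff_sum)
  also have "\<dots> = coeff (signof (id::nat\<Rightarrow>nat) * (\<Prod>i = 0..<m. P $$ (i, id i))) N"
  proof -
    have fin: "finite {p. p permutes {0..<(m::nat)}}" by (rule finite_permutations) simp
    have idin: "id \<in> {p. p permutes {0..<m}}" by (simp add: permutes_id)
    show ?thesis
      using other by (subst sum.remove[OF fin idin]) (auto intro!: sum.neutral)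
  qed
  also have "\<dots> = 1" by (rule idt)
  finally show ?thesis by auto
qed


section \<open>Pivots\<close>

lemma prow_sdeg_pivot:
  assumes "prow s r i"
  shows "sdeg s r = int (degree (r$i)) + s$i" "pivot_index s r = i"
proof -
  have A: "i < dim_vec r" "r$i \<noteq> 0"
    "\<And>j. j < dim_vec r \<Longrightarrow> r$j \<noteq> 0 \<Longrightarrow> int (degree (r$j)) + s$j \<le> int (degree (r$i)) + s$i"
    "\<And>j. j < dim_vec r \<Longrightarrow> i < j \<Longrightarrow> r$j \<noteq> 0 \<Longrightarrow> int (degree (r$j)) + s$j < int (degree (r$i)) + s$i"
    using assms by (auto simp: prow_def)
  have fin: "finite {int (degree (r$j)) + s$j | j. j < dim_vec r \<and> r$j \<noteq> 0}" by simp
  show sd: "sdeg s r = int (degree (r$i)) + s$i"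
    unfolding sdeg_def by (rule Max_eqI[OF fin]) (use A in auto)
  show "pivot_index s r = i"
    unfolding pivot_index_def sd
  proof (rule Max_eqI)
    show "finite {j. j < dim_vec r \<and> r $ j \<noteq> 0 \<and> int (degree (r $ j)) + s $ j = int (degree (r $ i)) + s $ i}" by simp
    fix j assume "j \<in> {j. j < dim_vec r \<and> r $ j \<noteq> 0 \<and> int (degree (r $ j)) + s $ j = int (degree (r $ i)) + s $ i}"
    then show "j \<le> i" using A(4)[of j] by (cases "i < j") auto
  qed (use A in auto)
qed

lemma pivot_prow:
  assumes i: "i < dim_vec r" and ri: "r$i \<noteq> 0" and pv: "pivot_index s r = i"
  shows "prow s r i"
proof -
  define D where "D = {int (degree (r$j)) + s$j | j. j < dim_vec r \<and> r$j \<noteq> 0}"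
  define S where "S = {j. j < dim_vec r \<and> r $ j \<noteq> 0 \<and> int (degree (r $ j)) + s $ j = sdeg s r}"
  have fD: "finite D" "D \<noteq> {}" using i ri by (auto simp: D_def)
  have sd: "sdeg s r = Max D" by (simp add: sdeg_def D_def)
  have "Max D \<in> D" using fD by simp
  then have "S \<noteq> {}" by (auto simp: S_def D_def sd)
  moreover have "finite S" by (simp add: S_def)
  ultimately have "Max S \<in> S" by simp
  moreover have "pivot_index s r = Max S" by (simp add: pivot_index_def S_def)
  ultimately have iS: "i \<in> S" using pv by simp
  have le: "int (degree (r$j)) + s$j \<le> sdeg s r" if "j < dim_vec r" "r$j \<noteq> 0" for j
    using that fD unfolding sd by (intro Max_ge) (auto simp: D_def)
  have jS: "j \<le> i" if "j \<in> S" for j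
    using that \<open>finite S\<close> pv Max_ge[of S j] by (simp add: pivot_index_def S_def[symmetric])
  show ?thesis unfolding prow_def
  proof (intro conjI allI impI)
    fix j assume j: "j < dim_vec r" "r$j \<noteq> 0"
    then show "int (degree (r$j)) + s$j \<le> int (degree (r$i)) + s$i" using le iS by (simp add: S_def)
  next
    fix j assume j: "j < dim_vec r" "i < j" "r$j \<noteq> 0"
    have "j \<notin> S" using jS j by force
    then show "int (degree (r$j)) + s$j < int (degree (r$i)) + s$i" using le[OF j(1,3)] iS j by (auto simp: S_def)
  qed (use i ri in auto)
qed

lemma popovD:
  assumes "s_popov s P"
  obtains m where "P \<in> carrier_mat m m" "dim_vec s = m" "det P \<noteq> 0" "dwp s P"
    "\<And>i. i < m \<Longrightarrow> lead_coeff (P$$(i,i)) = 1"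
    "\<And>i j. i < m \<Longrightarrow> j < m \<Longrightarrow> i \<noteq> j \<Longrightarrow> P $$ (i,j) = 0 \<or> degree (P $$ (i,j)) < degree (P $$ (j,j))"
proof -
  obtain m where m: "P \<in> carrier_mat m m" "dim_vec s = m" "det P \<noteq> 0"
    "\<And>i. i<m \<Longrightarrow> pivot_index s (row P i) = i \<and> lead_coeff (P $$ (i,i)) = 1"
    "\<And>i j. i<m \<Longrightarrow> j<m \<Longrightarrow> i \<noteq> j \<Longrightarrow> P $$ (i,j) = 0 \<or> degree (P $$ (i,j)) < degree (P $$ (j,j))"
    using assms unfolding s_popov_def by blast
  have "dwp s P" unfolding dwp_def
  proof (intro allI impI)
    fix i assume i: "i < dim_row P"
    have "P $$ (i,i) \<noteq> 0" using m(4)[of i] i m(1) by auto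
    then show "prow s (row P i) i" using m(1,4) i by (intro pivot_prow) auto
  qed
  then show ?thesis using that m by blast
qed

lemma lt_full_rank:
  fixes A :: "'b::field mat"
  assumes A: "A \<in> carrier_mat m m" and up: "\<And>i j. i < m \<Longrightarrow> j < m \<Longrightarrow> i < j \<Longrightarrow> A $$ (i,j) = 0"
    and d: "\<And>i. i < m \<Longrightarrow> A $$ (i,i) \<noteq> 0"
  shows "full_row_rank A"
  unfolding full_row_rank_def
proof (intro allI impI)
  fix c :: "'b vec" assume c: "dim_vec c = dim_row A"
    and z: "vec (dim_col A) (\<lambda>j. \<Sum>i<dim_row A. c $ i * A $$ (i, j)) = 0\<^sub>v (dim_col A)"
  have Ar: "dim_row A = m" "dim_col A = m" using A by auto
  show "c = 0\<^sub>v (dim_row A)"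
  proof (rule ccontr)
    assume "c \<noteq> 0\<^sub>v (dim_row A)"
    then obtain k where "k < m" "c$k \<noteq> 0" using c Ar by (metis eq_vecI index_zero_vec(1,2))
    define S where "S = {k. k < m \<and> c$k \<noteq> 0}"
    have "S \<noteq> {}" "finite S" using \<open>k < m\<close> \<open>c$k \<noteq> 0\<close> by (auto simp: S_def)
    then have iS: "Max S \<in> S" by simp
    define i where "i = Max S"
    have i: "i < m" "c$i \<noteq> 0" using iS by (auto simp: S_def i_def)
    have big: "c$l = 0" if "l < m" "i < l" for l
    proof (rule ccontr)
      assume "c$l \<noteq> 0"
      then have "l \<in> S" using that by (simp add: S_def)
      then have "l \<le> i" using \<open>finite S\<close> by (simp add: i_def)
      then show False using that by simp
    qed
    have "0 = (\<Sum>l<m. c $ l * A $$ (l, i))"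
      using arg_cong[OF z, of "\<lambda>v. v $ i"] i Ar by simp
    also have "\<dots> = c$i * A$$(i,i) + (\<Sum>l\<in>{..<m}-{i}. c $ l * A $$ (l, i))"
      using i by (simp add: sum.remove)
    also have "(\<Sum>l\<in>{..<m}-{i}. c $ l * A $$ (l, i)) = 0"
    proof (rule sum.neutral, intro ballI)
      fix l assume "l \<in> {..<m}-{i}"
      then have l: "l < m" "l \<noteq> i" by auto
      show "c $ l * A $$ (l, i) = 0"
      proof (cases "l < i")
        case True then show ?thesis using up[OF l(1) i(1)] by simp
      next
        case False then show ?thesis using big[OF l(1)] l by simp
      qed
    qed
    finally show False using i d[OF i(1)] by simp
  qed
qed

lemma leading_dwp:
  fixes W :: "'b::field poly mat"
  assumes W: "W \<in> carrier_mat m m" and D: "dwp s W" and monic: "\<And>i. i < m \<Longrightarrow> lead_coeff (W$$(i,i)) = 1"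
  shows "full_row_rank (leading_mat s W)"
proof -
  have Wr: "dim_row W = m" "dim_col W = m" using W by auto
  have pr: "prow s (row W i) i" if "i < m" for i using D that Wr by (simp add: dwp_def)
  have sd: "sdeg s (row W i) = int (degree (W$$(i,i))) + s$i" if "i < m" for i
    using prow_sdeg_pivot(1)[OF pr[OF that]] that Wr by simp
  show ?thesis
  proof (rule lt_full_rank[of _ m])
    show "leading_mat s W \<in> carrier_mat m m" using Wr by (simp add: leading_mat_def)
  next
    fix i j assume ij: "i < m" "j < m" "i < j"
    show "leading_mat s W $$ (i,j) = 0"
    proof (cases "W$$(i,j) = 0")
      case False
      have lt: "int (degree (W$$(i,j))) + s$j < int (degree (W$$(i,i))) + s$i"
        using dwpD(4)[OF D, of i j] ij Wr False by simp
      show ?thesis using ij Wr sd[OF ij(1)] lt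
        by (auto simp: leading_mat_def Let_def intro!: coeff_eq_0)
    qed (use ij Wr in \<open>simp add: leading_mat_def Let_def\<close>)
  next
    fix i assume i: "i < m"
    show "leading_mat s W $$ (i,i) \<noteq> 0" using i Wr sd[OF i] monic[OF i]
      by (simp add: leading_mat_def Let_def)
  qed
qed


section \<open>Modules of interpolants\<close>

lemma ib_alt: "is_interp_basis E J P \<longleftrightarrow> P \<in> carrier_mat (dim_row E) (dim_row E) \<and>
     (\<forall>i < dim_row P. is_interpolant E J (row P i)) \<and>
     (\<forall>p. is_interpolant E J p \<longrightarrow> (\<exists>c. dim_vec c = dim_row P \<and> p = vm c P)) \<and>
     (\<forall>c. dim_vec c = dim_row P \<longrightarrow> vm c P = 0\<^sub>v (dim_col P) \<longrightarrow> c = 0\<^sub>v (dim_row P))"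
  unfolding is_interp_basis_def vm_def by simp

lemma act_zero_entries:
  assumes "\<And>i l. i < dim_row G \<Longrightarrow> l < dim_col G \<Longrightarrow> G $$ (i,l) = 0" "k < dim_col J"
  shows "act c G J $ k = 0"
  using assms by (simp add: act_index)

lemma interp_vm:
  assumes J: "J \<in> carrier_mat n n" and E: "dim_col E = n" and P: "dim_col P = dim_row E"
    and rows: "\<And>i. i < dim_row P \<Longrightarrow> is_interpolant E J (row P i)"
    and c: "dim_vec c = dim_row P"
  shows "is_interpolant E J (vm c P)"
proof -
  have "act (vm c P) E J = act c (act_mat P E J) J" by (rule act_comp[OF J E P])
  also have "\<dots> = 0\<^sub>v (dim_col J)"
  proof (rule eq_vecI)
    fix k assume "k < dim_vec (0\<^sub>v (dim_col J) :: 'a vec)"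
    then have k: "k < dim_col J" by simp
    have "act c (act_mat P E J) J $ k = 0"
    proof (rule act_zero_entries[OF _ k])
      fix i l assume "i < dim_row (act_mat P E J)" "l < dim_col (act_mat P E J)"
      then show "act_mat P E J $$ (i,l) = 0" using rows[of i] by (auto simp: act_mat_def is_interpolant_def)
    qed
    then show "act c (act_mat P E J) J $ k = 0\<^sub>v (dim_col J) $ k" using k by simp
  qed simp
  finally show ?thesis using P by (simp add: is_interpolant_def)
qed

lemma pam_diff_index:
  assumes "l < dim_row J" "k < dim_col J"
  shows "poly_at_mat (a - b) J $$ (l,k) = poly_at_mat a J $$ (l,k) - poly_at_mat b J $$ (l,k)"
proof -
  have "poly_at_mat a J = poly_at_mat ((a - b) + b) J" by simp
  also have "\<dots> = poly_at_mat (a - b) J + poly_at_mat b J" by (rule pam_add)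
  finally show ?thesis using assms by simp
qed

lemma interp_diff:
  assumes "is_interpolant E J p" "is_interpolant E J q" and J: "J \<in> carrier_mat n n" and E: "dim_col E = n"
  shows "is_interpolant E J (p - q)"
proof -
  have d: "dim_vec p = dim_row E" "dim_vec q = dim_row E" using assms by (auto simp: is_interpolant_def)
  have "act (p - q) E J $ k = act p E J $ k - act q E J $ k" if k: "k < dim_col J" for k
    using k J E d by (simp add: act_index pam_diff_index algebra_simps sum_subtractf)
  then have "act (p - q) E J = 0\<^sub>v (dim_col J)" using assms(1,2) by (intro eq_vecI) (auto simp: is_interpolant_def)
  then show ?thesis using d by (simp add: is_interpolant_def)
qed

lemma min_deg:
  fixes W :: "'b::field poly mat"
  assumes ib: "is_interp_basis E J W" and m: "dim_row E = m" and D: "dwp s W"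
    and p: "is_interpolant E J p" "p \<noteq> 0\<^sub>v m"
  shows "\<exists>k<m. p$k \<noteq> 0 \<and> degree (W$$(k,k)) \<le> degree (p$k)"
proof -
  have W: "W \<in> carrier_mat m m" using ib m by (simp add: ib_alt)
  obtain c where c: "dim_vec c = m" "p = vm c W" using ib p(1) W by (auto simp: ib_alt)
  have "c \<noteq> 0\<^sub>v m" using c p(2) vm_zero[of W] W by auto
  from pdp_ex[OF W D c(1) this] obtain k where k: "k < m" "prow s (vm c W) k"
    "degree (vm c W $ k) = degree (c$k) + degree (W$$(k,k))" by blast
  then show ?thesis using c by (auto simp: prow_def)
qed

lemma deg_le:
  fixes W Q :: "'b::field poly mat"
  assumes ib: "is_interp_basis E J W" and m: "dim_row E = m" and D: "dwp s W"
    and Q: "Q \<in> carrier_mat m m" "\<And>i. i < m \<Longrightarrow> is_interpolant E J (row Q i)" "dwp s Q"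
    and i: "i < m"
  shows "degree (W$$(i,i)) \<le> degree (Q$$(i,i))"
proof -
  have W: "W \<in> carrier_mat m m" using ib m by (simp add: ib_alt)
  obtain c where c: "dim_vec c = m" "row Q i = vm c W" using ib Q(2)[OF i] W by (auto simp: ib_alt)
  have pq: "prow s (row Q i) i" using Q(3) Q(1) i by (simp add: dwp_def)
  have "c \<noteq> 0\<^sub>v m"
  proof
    assume "c = 0\<^sub>v m"
    then have "row Q i = 0\<^sub>v m" using c vm_zero[of W] W by auto
    then show False using pq i Q(1) by (auto simp: prow_def)
  qed
  from pdp_ex[OF W D c(1) this] obtain k where k: "k < m" "prow s (vm c W) k"
    "degree (vm c W $ k) = degree (c$k) + degree (W$$(k,k))" by blast
  have "k = i" using prow_unique[OF pq[unfolded c(2)] k(2)] by simp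
  moreover have "Q$$(i,i) = vm c W $ i" using arg_cong[OF c(2), of "\<lambda>v. v $ i"] i Q(1) by simp
  ultimately show ?thesis using k by simp
qed

lemma popov_unique:
  fixes P Q :: "'b::field poly mat"
  assumes J: "J \<in> carrier_mat n n" and E: "dim_col E = n"
    and P: "is_interp_basis E J P" "s_popov s P" and Q: "is_interp_basis E J Q" "s_popov s Q"
  shows "P = Q"
proof -
  define m where "m = dim_row E"
  have Pc: "P \<in> carrier_mat m m" and Qc: "Q \<in> carrier_mat m m" using P Q by (auto simp: ib_alt m_def)
  obtain m1 where m1: "P \<in> carrier_mat m1 m1" "dwp s P" "\<And>i. i < m1 \<Longrightarrow> lead_coeff (P$$(i,i)) = 1"
    "\<And>i j. i < m1 \<Longrightarrow> j < m1 \<Longrightarrow> i \<noteq> j \<Longrightarrow> P $$ (i,j) = 0 \<or> degree (P $$ (i,j)) < degree (P $$ (j,j))"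
  proof (rule popovD[OF P(2)])
    fix m1 assume "P \<in> carrier_mat m1 m1" "dwp s P" "\<And>i. i < m1 \<Longrightarrow> lead_coeff (P$$(i,i)) = 1"
    "\<And>i j. i < m1 \<Longrightarrow> j < m1 \<Longrightarrow> i \<noteq> j \<Longrightarrow> P $$ (i,j) = 0 \<or> degree (P $$ (i,j)) < degree (P $$ (j,j))"
    then show thesis using that by blast
  qed
  obtain m2 where m2: "Q \<in> carrier_mat m2 m2" "dwp s Q" "\<And>i. i < m2 \<Longrightarrow> lead_coeff (Q$$(i,i)) = 1"
    "\<And>i j. i < m2 \<Longrightarrow> j < m2 \<Longrightarrow> i \<noteq> j \<Longrightarrow> Q $$ (i,j) = 0 \<or> degree (Q $$ (i,j)) < degree (Q $$ (j,j))"
  proof (rule popovD[OF Q(2)])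
    fix m2 assume "Q \<in> carrier_mat m2 m2" "dwp s Q" "\<And>i. i < m2 \<Longrightarrow> lead_coeff (Q$$(i,i)) = 1"
    "\<And>i j. i < m2 \<Longrightarrow> j < m2 \<Longrightarrow> i \<noteq> j \<Longrightarrow> Q $$ (i,j) = 0 \<or> degree (Q $$ (i,j)) < degree (Q $$ (j,j))"
    then show thesis using that by blast
  qed
  have mm: "m1 = m" "m2 = m" using m1(1) m2(1) Pc Qc by auto
  have rP: "\<And>i. i < m \<Longrightarrow> is_interpolant E J (row P i)" using P Pc by (auto simp: ib_alt)
  have rQ: "\<And>i. i < m \<Longrightarrow> is_interpolant E J (row Q i)" using Q Qc by (auto simp: ib_alt)
  have deq: "degree (P$$(i,i)) = degree (Q$$(i,i))" if "i < m" for i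
    using deg_le[OF P(1) m_def[symmetric] m1(2) Qc rQ m2(2) that] deg_le[OF Q(1) m_def[symmetric] m2(2) Pc rP m1(2) that]
    by simp
  have rows: "row P i = row Q i" if i: "i < m" for i
  proof (rule ccontr)
    assume ne: "row P i \<noteq> row Q i"
    define d where "d = row P i - row Q i"
    have di: "is_interpolant E J d" unfolding d_def by (rule interp_diff[OF rP[OF i] rQ[OF i] J E])
    have "d \<noteq> 0\<^sub>v m"
    proof
      assume z: "d = 0\<^sub>v m"
      have "row P i $ j = row Q i $ j" if j: "j < m" for j
        using arg_cong[OF z, of "\<lambda>v. v $ j"] j Pc Qc by (simp add: d_def)
      then have "row P i = row Q i" using Pc Qc by (intro eq_vecI) auto
      then show False using ne by simp
    qed
    from min_deg[OF P(1) m_def[symmetric] m1(2) di this] obtain k where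
      k: "k < m" "d$k \<noteq> 0" "degree (P$$(k,k)) \<le> degree (d$k)" by blast
    have dk: "d$k = P$$(i,k) - Q$$(i,k)" using k i Pc Qc by (simp add: d_def)
    have "dle (d$k) (int (degree (P$$(k,k))) - 1)"
    proof (cases "k = i")
      case True
      have "dle (P$$(i,i) - Q$$(i,i)) (int (degree (P$$(i,i))) - 1)"
      proof (rule dle_cancel)
        show "degree (Q$$(i,i)) = degree (P$$(i,i))" using deq[OF i] by simp
        have "lead_coeff (P$$(i,i)) = 1" "lead_coeff (Q$$(i,i)) = 1" using m1(3)[of i] m2(3)[of i] i mm by auto
        then show "lead_coeff (Q$$(i,i)) = lead_coeff (P$$(i,i))" by simp
      qed
      then show ?thesis using True dk by simp
    next
      case False
      have a: "dle (P$$(i,k)) (int (degree (P$$(k,k))) - 1)" using m1(4)[of i k] i k False mm by (auto simp: dle_def)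
      have b: "dle (Q$$(i,k)) (int (degree (P$$(k,k))) - 1)" using m2(4)[of i k] i k False mm deq[OF k(1)] by (auto simp: dle_def)
      show ?thesis unfolding dk by (rule dle_diff[OF a b])
    qed
    then show False using k by (auto simp: dle_def)
  qed
  show ?thesis
  proof (rule eq_matI)
    fix i j assume "i < dim_row Q" "j < dim_col Q"
    then show "P $$ (i,j) = Q $$ (i,j)" using arg_cong[OF rows[of i], of "\<lambda>v. v $ j"] Pc Qc by simp
  qed (use Pc Qc in auto)
qed


lemma popov_exists:
  fixes W :: "'b::field poly mat"
  assumes J: "J \<in> carrier_mat n n" and E: "dim_col E = n" and m: "dim_row E = m"
    and ib: "is_interp_basis E J W" and D: "dwp s W" and monic: "\<And>i. i < m \<Longrightarrow> lead_coeff (W$$(i,i)) = 1"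
    and s: "dim_vec s = m"
  shows "\<exists>P. is_interp_basis E J P \<and> s_popov s P \<and> (\<forall>i<m. degree (P$$(i,i)) = degree (W$$(i,i)))"
proof -
  have W: "W \<in> carrier_mat m m" using ib m by (simp add: ib_alt)
  have Wr: "dim_row W = m" "dim_col W = m" using W by auto
  have rW: "\<And>i. i < m \<Longrightarrow> is_interpolant E J (row W i)" using ib Wr by (auto simp: ib_alt)
  define \<delta> where "\<delta> i = degree (W$$(i,i))" for i
  define t where "t i = vec m (\<lambda>j. if j = i then monom (1::'b) (\<delta> i) else 0)" for i
  have "\<forall>i. \<exists>c. i < m \<longrightarrow> dim_vec c = m \<and> (\<forall>l<m. dle ((t i - vm c W) $ l) (int (\<delta> l) - 1))"
    using division[OF W D monic] by (auto simp: t_def \<delta>_def)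
  then obtain C where C: "\<And>i. i < m \<Longrightarrow> dim_vec (C i) = m"
    "\<And>i l. i < m \<Longrightarrow> l < m \<Longrightarrow> dle ((t i - vm (C i) W) $ l) (int (\<delta> l) - 1)"
    by metis
  define P where "P = mat m m (\<lambda>(i,j). vm (C i) W $ j)"
  have Pc: "P \<in> carrier_mat m m" by (simp add: P_def)
  have rowP: "row P i = vm (C i) W" if "i < m" for i
    using that Wr by (intro eq_vecI) (auto simp: P_def)
  have Pij: "P$$(i,j) = t i $ j - (t i - vm (C i) W) $ j" if "i < m" "j < m" for i j
    using that Wr by (simp add: P_def)
  have off: "dle (P$$(i,j)) (int (\<delta> j) - 1)" if "i < m" "j < m" "i \<noteq> j" for i j
    using C(2)[of i j] that Pij[of i j] by (simp add: t_def dle_uminus)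
  have diag: "P$$(i,i) \<noteq> 0 \<and> degree (P$$(i,i)) = \<delta> i \<and> lead_coeff (P$$(i,i)) = 1" if i: "i < m" for i
  proof -
    have e: "P$$(i,i) = monom 1 (\<delta> i) + - ((t i - vm (C i) W) $ i)" using Pij[OF i i] i by (simp add: t_def)
    have "dle (- ((t i - vm (C i) W) $ i)) (int (degree (monom (1::'b) (\<delta> i))) - 1)"
      using C(2)[OF i i] by (simp add: dle_uminus degree_monom_eq)
    note X = dle_top[OF _ this]
    have lc: "monom (1::'b) (\<delta> i) \<noteq> 0" "coeff (monom (1::'b) (\<delta> i)) (\<delta> i) = 1" "degree (monom (1::'b) (\<delta> i)) = \<delta> i"
      by (simp_all add: degree_monom_eq)
    show ?thesis unfolding e using X[OF lc(1)] unfolding lc(3) unfolding lc(2) .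
  qed
  have rP: "is_interpolant E J (row P i)" if "i < m" for i
    unfolding rowP[OF that] by (rule interp_vm[OF J E]) (use Wr m rW C(1) that in auto)
  have prP: "prow s (row P i) i" if i: "i < m" for i
  proof -
    have "C i \<noteq> 0\<^sub>v m"
    proof
      assume z: "C i = 0\<^sub>v m"
      have "P$$(i,i) = vm (C i) W $ i" using i Wr by (simp add: P_def)
      also have "\<dots> = 0" using z vm_zero[of W] Wr i by simp
      finally have "P$$(i,i) = 0" .
      then show False using diag[OF i] by simp
    qed
    from pdp_ex[OF W D C(1)[OF i] this] obtain k where k: "k < m" "prow s (vm (C i) W) k"
      "degree (vm (C i) W $ k) = degree (C i $ k) + degree (W$$(k,k))" by blast
    have Pik: "P$$(i,k) = vm (C i) W $ k" using i k Wr by (simp add: P_def)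
    have "k = i"
    proof (rule ccontr)
      assume "k \<noteq> i"
      then have "dle (P$$(i,k)) (int (\<delta> k) - 1)" using off[OF i k(1)] by simp
      moreover have "P$$(i,k) \<noteq> 0" using k(2) Pik by (simp add: prow_def)
      ultimately show False using k(3) Pik by (auto simp: dle_def \<delta>_def)
    qed
    then show ?thesis using k(2) rowP[OF i] by simp
  qed
  have Dp: "dwp s P" using prP Pc by (simp add: dwp_def)
  have monP: "\<And>i. i < m \<Longrightarrow> lead_coeff (P$$(i,i)) = 1" using diag by blast
  have popov: "s_popov s P"
    unfolding s_popov_def
  proof (intro exI[of _ m] conjI allI impI)
    show "P \<in> carrier_mat m m" by (rule Pc)
    show "dim_vec s = m" by (rule s)
    show "det P \<noteq> 0" by (rule det_dwp[OF Pc Dp monP])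
    fix i assume i: "i < m"
    show "pivot_index s (row P i) = i" by (rule prow_sdeg_pivot(2)[OF prP[OF i]])
    show "lead_coeff (P $$ (i, i)) = 1" using diag[OF i] by blast
    fix j assume j: "j < m" "i \<noteq> j"
    show "P $$ (i, j) = 0 \<or> degree (P $$ (i, j)) < degree (P $$ (j, j))"
      using off[OF i j] diag[OF j(1)] by (auto simp: dle_def)
  qed
  have ibP: "is_interp_basis E J P"
    unfolding ib_alt
  proof (intro conjI allI impI)
    show "P \<in> carrier_mat (dim_row E) (dim_row E)" using Pc m by simp
    fix i assume "i < dim_row P" then show "is_interpolant E J (row P i)" using rP Pc by simp
  next
    fix p assume p: "is_interpolant E J p"
    have dp: "dim_vec p = m" using p m by (simp add: is_interpolant_def)
    obtain c where c: "dim_vec c = m" "\<And>l. l < m \<Longrightarrow> dle ((p - vm c P) $ l) (int (degree (P$$(l,l))) - 1)"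
      using division[OF Pc Dp monP dp] by blast
    have di: "is_interpolant E J (p - vm c P)"
      by (rule interp_diff[OF p interp_vm[OF J E] J E]) (use Pc m rP c in auto)
    have "p - vm c P = 0\<^sub>v m"
    proof (rule ccontr)
      assume "p - vm c P \<noteq> 0\<^sub>v m"
      from min_deg[OF ib m D di this] obtain k where k: "k < m" "(p - vm c P) $ k \<noteq> 0"
        "degree (W$$(k,k)) \<le> degree ((p - vm c P) $ k)" by blast
      then show False using c(2)[OF k(1)] diag[OF k(1)] by (auto simp: dle_def \<delta>_def)
    qed
    then have z: "p - vm c P = 0\<^sub>v m" .
    have "p $ j = vm c P $ j" if j: "j < m" for j
      using arg_cong[OF z, of "\<lambda>v. v $ j"] j dp Pc by simp
    then have "p = vm c P" using dp Pc by (intro eq_vecI) auto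
    then show "\<exists>c. dim_vec c = dim_row P \<and> p = vm c P" using c Pc by auto
  next
    fix c assume c: "dim_vec c = dim_row P" "vm c P = 0\<^sub>v (dim_col P)"
    show "c = 0\<^sub>v (dim_row P)"
    proof (rule ccontr)
      assume "c \<noteq> 0\<^sub>v (dim_row P)"
      from pdp_ex[OF Pc Dp _ this[unfolded carrier_matD(1)[OF Pc]]] c Pc obtain k where
        "k < m" "prow s (vm c P) k" by auto
      then show False using c Pc by (auto simp: prow_def)
    qed
  qed
  show ?thesis using ibP popov diag by (auto simp: \<delta>_def)
qed



lemma row_mult_vm:
  assumes A: "A \<in> carrier_mat m m" and B: "B \<in> carrier_mat m m" and i: "i < m"
  shows "row (A * B) i = vm (row A i) B"
  using A B i by (intro eq_vecI) (auto simp: vm_def scalar_prod_def atLeast0LessThan)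

lemma vm_assoc:
  assumes A: "A \<in> carrier_mat m m" and B: "B \<in> carrier_mat m m" and d: "dim_vec d = m"
  shows "vm d (A * B) = vm (vm d A) B"
proof (rule eq_vecI)
  fix j assume "j < dim_vec (vm (vm d A) B)"
  then have j: "j < m" using B by simp
  have "vm d (A * B) $ j = (\<Sum>i<m. d $ i * (\<Sum>k<m. A $$ (i,k) * B $$ (k,j)))"
    using A B j by (simp add: vm_def scalar_prod_def atLeast0LessThan)
  also have "\<dots> = (\<Sum>k<m. (\<Sum>i<m. d $ i * A $$ (i,k)) * B $$ (k,j))"
    by (simp add: sum_distrib_left sum_distrib_right mult.assoc) (rule sum.swap)
  also have "\<dots> = vm (vm d A) B $ j"
    using A B j by (simp add: vm_def)
  finally show "vm d (A * B) $ j = vm (vm d A) B $ j" .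
qed (use A B in simp)


theorem mainTheorem6:
  fixes E J :: "'a::field mat" and s :: "int vec" and P1 P2 :: "'a poly mat"
    and m \<sigma> :: nat
  defines "h1 \<equiv> (\<sigma> + 1) div 2" and "h2 \<equiv> \<sigma> div 2"
  defines "E1 \<equiv> mat m h1 (\<lambda>(i,j). E $$ (i,j))"
    and "J1 \<equiv> mat h1 h1 (\<lambda>(i,j). J $$ (i,j))"
    and "J2 \<equiv> mat h2 h2 (\<lambda>(i,j). J $$ (h1 + i, h1 + j))"
  defines "\<delta>1 \<equiv> diag_degrees P1"
  defines "E2 \<equiv> mat m h2 (\<lambda>(i,j). act_mat P1 E J $$ (i, h1 + j))"
  defines "\<delta>2 \<equiv> diag_degrees P2"
  assumes "E \<in> carrier_mat m \<sigma>" and "\<sigma> \<ge> 2"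
    and "J \<in> carrier_mat \<sigma> \<sigma>" and "upper_triangular J"
    and "dim_vec s = m"
    and "is_interp_basis E1 J1 P1" and "s_popov s P1"
    and "is_interp_basis E2 J2 P2" and "s_popov (s + \<delta>1) P2"
  shows "is_interp_basis E J (P2 * P1) \<and> s_reduced s (P2 * P1)
         \<and> minimal_degree s E J = \<delta>1 + \<delta>2"
proof -
  note Ec = assms(9) and Jc = assms(11) and ut = assms(12) and sd = assms(13)
    and ib1 = assms(14) and pp1 = assms(15) and ib2 = assms(16) and pp2 = assms(17)
  have hs: "h1 + h2 = \<sigma>" unfolding h1_def h2_def by simp
  have Er: "dim_row E = m" "dim_col E = \<sigma>" using Ec by auto
  have J1eq: "blk1 J h1 = J1" by (simp add: blk1_def[OF Jc ut hs] J1_def)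
  have J2eq: "blk2 J h1 h2 = J2" by (simp add: blk2_def[OF Jc ut hs] J2_def)
  have J1c: "J1 \<in> carrier_mat h1 h1" and J2c: "J2 \<in> carrier_mat h2 h2" by (auto simp: J1_def J2_def)
  have E1c: "dim_row E1 = m" "dim_col E1 = h1" and E2c: "dim_row E2 = m" "dim_col E2 = h2"
    by (auto simp: E1_def E2_def)
  have P1c: "P1 \<in> carrier_mat m m" using ib1 E1c by (simp add: ib_alt)
  have P2c: "P2 \<in> carrier_mat m m" using ib2 E2c by (simp add: ib_alt)
  have P1r: "dim_row P1 = m" "dim_col P1 = m" and P2r: "dim_row P2 = m" "dim_col P2 = m" using P1c P2c by auto
  have d1dim: "dim_vec \<delta>1 = m" using P1r by (simp add: \<delta>1_def diag_degrees_def)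
  have d2dim: "dim_vec \<delta>2 = m" using P2r by (simp add: \<delta>2_def diag_degrees_def)
  obtain D1: "dwp s P1" and mon1: "\<And>i. i < m \<Longrightarrow> lead_coeff (P1$$(i,i)) = 1"
  proof (rule popovD[OF pp1])
    fix m1 assume "P1 \<in> carrier_mat m1 m1" "dwp s P1" "\<And>i. i < m1 \<Longrightarrow> lead_coeff (P1$$(i,i)) = 1"
    then show thesis using that P1c by blast
  qed
  obtain D2: "dwp (s + \<delta>1) P2" and mon2: "\<And>i. i < m \<Longrightarrow> lead_coeff (P2$$(i,i)) = 1"
  proof (rule popovD[OF pp2])
    fix m1 assume "P2 \<in> carrier_mat m1 m1" "dwp (s + \<delta>1) P2" "\<And>i. i < m1 \<Longrightarrow> lead_coeff (P2$$(i,i)) = 1"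
    then show thesis using that P2c by blast
  qed
  have rP1: "\<And>i. i < m \<Longrightarrow> is_interpolant E1 J1 (row P1 i)" using ib1 P1r by (simp add: ib_alt)
  have rP2: "\<And>i. i < m \<Longrightarrow> is_interpolant E2 J2 (row P2 i)" using ib2 P2r by (simp add: ib_alt)
  have E1eq: "mat (dim_row E) h1 (\<lambda>(i,j). E $$ (i,j)) = E1" using Er by (simp add: E1_def)
  have tr1: "act c E J $ k = act c E1 J1 $ k" if "k < h1" for c k
    using act_b1[OF Jc ut hs Er(2) that, of c] unfolding E1eq J1eq .
  define F where "F = act_mat P1 E J"
  have Fr: "dim_row F = m" "dim_col F = \<sigma>" using P1r Jc by (auto simp: F_def)
  have Fz: "F $$ (i,l) = 0" if "i < dim_row F" "l < h1" for i l
  proof -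
    have i: "i < m" using that Fr by simp
    have "F $$ (i,l) = act (row P1 i) E J $ l" using that Fr hs by (simp add: F_def act_mat_def)
    also have "\<dots> = act (row P1 i) E1 J1 $ l" by (rule tr1[OF that(2)])
    also have "\<dots> = 0" using rP1[OF i] that(2) J1c by (simp add: is_interpolant_def)
    finally show ?thesis .
  qed
  have E2eq: "mat (dim_row F) h2 (\<lambda>(i,j). F $$ (i,h1+j)) = E2" using Fr by (simp add: E2_def F_def)
  have comp: "act (vm c P1) E J = act c F J" for c
    unfolding F_def by (rule act_comp[OF Jc Er(2)]) (simp add: P1r Er)
  have low: "act c F J $ k = 0" if "k < h1" for c k
  proof -
    have "act c F J $ k = act c (mat (dim_row F) h1 (\<lambda>(i,j). F $$ (i,j))) (blk1 J h1) $ k"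
      by (rule act_b1[OF Jc ut hs Fr(2) that])
    also have "\<dots> = 0" by (rule act_zero_entries) (use Fz J1c J1eq that in auto)
    finally show ?thesis .
  qed
  have high: "act c F J $ (h1 + k) = act c E2 J2 $ k" if "k < h2" for c k
    using act_b2[OF Jc ut hs Fr(2) that Fz, of c] unfolding E2eq J2eq .
  have key: "act c F J = 0\<^sub>v \<sigma> \<longleftrightarrow> act c E2 J2 = 0\<^sub>v h2" for c
  proof
    assume z: "act c F J = 0\<^sub>v \<sigma>"
    show "act c E2 J2 = 0\<^sub>v h2"
    proof (rule eq_vecI)
      fix k assume "k < dim_vec (0\<^sub>v h2 :: 'a vec)"
      then have k: "k < h2" by simp
      show "act c E2 J2 $ k = 0\<^sub>v h2 $ k"
        using high[OF k, of c] arg_cong[OF z, of "\<lambda>v. v $ (h1+k)"] k hs by simp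
    qed (use J2c in simp)
  next
    assume z: "act c E2 J2 = 0\<^sub>v h2"
    show "act c F J = 0\<^sub>v \<sigma>"
    proof (rule eq_vecI)
      fix k assume "k < dim_vec (0\<^sub>v \<sigma> :: 'a vec)"
      then have k: "k < \<sigma>" by simp
      show "act c F J $ k = 0\<^sub>v \<sigma> $ k"
      proof (cases "k < h1")
        case True then show ?thesis using low k by simp
      next
        case False
        then obtain k' where k': "k = h1 + k'" "k' < h2" using k hs by (metis add_less_cancel_left le_Suc_ex not_less)
        show ?thesis using high[OF k'(2), of c] arg_cong[OF z, of "\<lambda>v. v $ k'"] k'(2) k k' by simp
      qed
    qed (use Jc in simp)
  qed
  define W where "W = P2 * P1"
  have Wc: "W \<in> carrier_mat m m" using P1c P2c by (simp add: W_def)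
  have Wr: "dim_row W = m" "dim_col W = m" using Wc by auto
  have rowW: "row W i = vm (row P2 i) P1" if "i < m" for i
    unfolding W_def by (rule row_mult_vm[OF P2c P1c that])
  have ibW: "is_interp_basis E J W"
    unfolding ib_alt
  proof (intro conjI allI impI)
    show "W \<in> carrier_mat (dim_row E) (dim_row E)" using Wc Er by simp
  next
    fix i assume "i < dim_row W"
    then have i: "i < m" using Wr by simp
    have "act (row W i) E J = act (row P2 i) F J" unfolding rowW[OF i] comp ..
    also have "\<dots> = 0\<^sub>v \<sigma>" using key rP2[OF i] J2c by (simp add: is_interpolant_def)
    finally show "is_interpolant E J (row W i)" using Wr Er Jc by (simp add: is_interpolant_def)
  next
    fix p assume p: "is_interpolant E J p"
    have p1: "is_interpolant E1 J1 p"
      unfolding is_interpolant_def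
    proof
      show "dim_vec p = dim_row E1" using p Er E1c by (simp add: is_interpolant_def)
      show "act p E1 J1 = 0\<^sub>v (dim_col J1)"
      proof (rule eq_vecI)
        fix k assume "k < dim_vec (0\<^sub>v (dim_col J1) :: 'a vec)"
        then have k: "k < h1" using J1c by simp
        show "act p E1 J1 $ k = 0\<^sub>v (dim_col J1) $ k"
          using tr1[OF k, of p] p k hs J1c Jc by (simp add: is_interpolant_def)
      qed (use J1c in simp)
    qed
    obtain c where c: "dim_vec c = m" "p = vm c P1" using ib1 p1 P1r by (auto simp: ib_alt)
    have "act c F J = 0\<^sub>v \<sigma>" using p c comp[of c] Jc by (simp add: is_interpolant_def)
    then have "is_interpolant E2 J2 c" using key[of c] c E2c J2c by (simp add: is_interpolant_def)
    then obtain d where d: "dim_vec d = m" "c = vm d P2" using ib2 P2r by (auto simp: ib_alt)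
    have "p = vm d W" using c d vm_assoc[OF P2c P1c d(1)] by (simp add: W_def)
    then show "\<exists>c. dim_vec c = dim_row W \<and> p = vm c W" using d Wr by auto
  next
    fix c assume c: "dim_vec c = dim_row W" "vm c W = 0\<^sub>v (dim_col W)"
    have "vm (vm c P2) P1 = 0\<^sub>v (dim_col P1)" using c vm_assoc[OF P2c P1c] Wr P1r by (simp add: W_def)
    then have "vm c P2 = 0\<^sub>v m" using ib1 P1r P2r by (simp add: ib_alt)
    then show "c = 0\<^sub>v (dim_row W)" using ib2 P2r c Wr by (simp add: ib_alt)
  qed
  have dW: "prow s (row W i) i \<and> degree (W$$(i,i)) = degree (P2$$(i,i)) + degree (P1$$(i,i))
     \<and> lead_coeff (W$$(i,i)) = 1" if i: "i < m" for i
  proof -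
    have sh: "(s + \<delta>1) $ l = s $ l + int (degree (P1$$(l,l)))" if "l < m" for l
      using that sd d1dim P1r by (simp add: \<delta>1_def diag_degrees_def)
    have pr: "prow s (vm (row P2 i) P1) i \<and> degree (vm (row P2 i) P1 $ i) = degree (row P2 i $ i) + degree (P1$$(i,i))
     \<and> lead_coeff (vm (row P2 i) P1 $ i) = lead_coeff (row P2 i $ i) * lead_coeff (P1$$(i,i))"
    proof (rule pdp[OF P1c D1])
      show "dim_vec (row P2 i) = m" using P2r by simp
      show "i < m" by (rule i)
      show "row P2 i $ i \<noteq> 0" using dwpD(2)[OF D2] i P2r by simp
      fix l assume l: "l < m"
      assume nz: "row P2 i $ l \<noteq> 0"
      have "int (degree (P2$$(i,l))) + (s + \<delta>1)$l \<le> int (degree (P2$$(i,i))) + (s + \<delta>1)$i"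
        using dwpD(3)[OF D2, of i l] i l nz P2r by simp
      then show "int (degree (row P2 i $ l)) + s $ l + int (degree (P1 $$ (l, l)))
         \<le> int (degree (row P2 i $ i)) + s $ i + int (degree (P1 $$ (i, i)))"
        using sh[OF l] sh[OF i] i l P2r by simp
    next
      fix l assume l: "l < m" "i < l"
      assume nz: "row P2 i $ l \<noteq> 0"
      have "int (degree (P2$$(i,l))) + (s + \<delta>1)$l < int (degree (P2$$(i,i))) + (s + \<delta>1)$i"
        using dwpD(4)[OF D2, of i l] i l nz P2r by simp
      then show "int (degree (row P2 i $ l)) + s $ l + int (degree (P1 $$ (l, l)))
         < int (degree (row P2 i $ i)) + s $ i + int (degree (P1 $$ (i, i)))"
        using sh[OF l(1)] sh[OF i] i l P2r by simp
    qed
    have Wii: "W$$(i,i) = vm (row P2 i) P1 $ i" using arg_cong[OF rowW[OF i], of "\<lambda>v. v $ i"] i Wr by simp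
    have rl: "row P2 i $ i = P2 $$ (i,i)" using i P2r by simp
    note pr' = conjunct1[OF pr] conjunct1[OF conjunct2[OF pr]] conjunct2[OF conjunct2[OF pr]]
    show ?thesis
    proof (intro conjI)
      show "prow s (row W i) i" using pr'(1) rowW[OF i] by simp
      show "degree (W$$(i,i)) = degree (P2$$(i,i)) + degree (P1$$(i,i))" using pr'(2) Wii rl by simp
      show "lead_coeff (W$$(i,i)) = 1" unfolding Wii pr'(3) rl by (simp only: mon1[OF i] mon2[OF i] mult_1)
    qed
  qed
  have DW: "dwp s W" using dW Wr by (simp add: dwp_def)
  have monW: "\<And>i. i < m \<Longrightarrow> lead_coeff (W$$(i,i)) = 1" using dW by blast
  have red: "s_reduced s W"
    unfolding s_reduced_def
  proof (intro conjI)
    show "dim_vec s = dim_col W" using sd Wr by simp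
    show "full_row_rank W" using ibW unfolding is_interp_basis_def full_row_rank_def by blast
    show "full_row_rank (leading_mat s W)" by (rule leading_dwp[OF Wc DW monW])
  qed
  obtain P where P: "is_interp_basis E J P" "s_popov s P" "\<And>i. i < m \<Longrightarrow> degree (P$$(i,i)) = degree (W$$(i,i))"
    using popov_exists[OF Jc Er(2) Er(1) ibW DW monW sd] by blast
  have the: "popov_interp_basis s E J = P"
    unfolding popov_interp_basis_def
  proof (rule the_equality)
    show "is_interp_basis E J P \<and> s_popov s P" using P by simp
    fix Q assume "is_interp_basis E J Q \<and> s_popov s Q"
    then show "Q = P" using popov_unique[OF Jc Er(2)] P by blast
  qed
  have Pr: "dim_row P = m" using P(1) Er unfolding ib_alt by auto
  have md: "minimal_degree s E J = \<delta>1 + \<delta>2"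
    unfolding minimal_degree_def the
  proof (rule eq_vecI)
    fix i assume "i < dim_vec (\<delta>1 + \<delta>2)"
    then have i: "i < m" using d2dim by simp
    show "diag_degrees P $ i = (\<delta>1 + \<delta>2) $ i"
      using i Pr P(3)[OF i] dW[OF i] d1dim d2dim P1r P2r by (simp add: diag_degrees_def \<delta>1_def \<delta>2_def)
  qed (use Pr d2dim in \<open>simp add: diag_degrees_def\<close>)
  show ?thesis using ibW red md by (simp add: W_def)
qed

end
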